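(* Let $\alpha\in(0,1)$ be irrational with negative continued fraction expansion $\alpha=[0;a_1,a_2,a_3,\ldots]^-$, and let $R:=\liminf_{i\to\infty}a_i$. Suppose $R\geq 3$. Let $\gamma^*\in(0,1)$ be the number defined (in the context below) from $\alpha$. If $R$ is finite, then $$\rho(\alpha)\geq M(\alpha,\gamma^* )\geq C(R):=\frac{(1-2\delta)(1-\beta)}{4(1-\delta\beta)},$$ where, for $R$ even, $\beta=\frac12\big(R-\sqrt{R^2-4}\big)$ and $\delta=\frac{1}{R+1-\beta}$, and, for $R$ odd, $\beta=\frac12\big(R+1-\sqrt{(R+1)^2-4}\big)$ and $\delta=\frac{1}{R-\beta}$. Explicitly, $C(R)=\frac14\cdot\frac{R-2}{\sqrt{R^2-4}+1}$ for even $R$ and $C(R)=\frac14\cdot\frac{2R-2-\sqrt{(R+1)^2-4}}{\sqrt{(R+1)^2-4}-1}$ for odd $R$. In particular, if $R\geq 3$ then $$\rho(\alpha)\geq C(3)=\frac{1}{6\sqrt3+8},$$ and if $R\geq 4$ then $$\rho(\alpha)\geq C(4)=\frac{1}{4\sqrt3+2}.$$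
   Context: For real $x$, $\|x\|$ denotes the distance from $x$ to the nearest integer. For irrational $\alpha$ and real $\gamma$, $M(\alpha,\gamma):=\liminf_{|n|\to\infty}|n|\,\|n\alpha-\gamma\|$ (over nonzero integers $n$), and $\rho(\alpha):=\sup_{\gamma\notin\mathbb{Z}+\alpha\mathbb{Z}}M(\alpha,\gamma)$. The negative continued fraction expansion of $\alpha\in(0,1)$ is $\alpha=\cfrac{1}{a_1-\cfrac{1}{a_2-\cfrac{1}{a_3-\cdots}}}=:[0;a_1,a_2,\ldots]^-$, where the integers $a_i\geq 2$ are produced by $\alpha_0:=\alpha$, $a_{n+1}:=\lceil 1/\alpha_n\rceil$, $\alpha_{n+1}:=\lceil 1/\alpha_n\rceil-1/\alpha_n$. The convergents $p_n/q_n$ satisfy $p_{n+1}=a_{n+1}p_n-p_{n-1}$, $q_{n+1}=a_{n+1}q_n-q_{n-1}$ with $p_0=0,p_{-1}=-1,q_0=1,q_{-1}=0$, and $D_n:=q_n\alpha-p_n$. Define integers $t_i$ by: $t_i=0$ if $a_i$ is even, and $t_i=(-1)^{j+1}$ if $a_i$ is the $j$-th odd partial quotient (counting odd terms of the sequence $a_1,a_2,\ldots$ in order). Then $\gamma^*:=\sum_{i=1}^\infty \tfrac12(a_i-2+t_i)D_{i-1}$. *)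

theory Defs
  imports "HOL-Analysis.Analysis"
begin

definition dist_int :: "real \<Rightarrow> real" where
  "dist_int x = min (x - of_int \<lfloor>x\<rfloor>) (of_int \<lceil>x\<rceil> - x)"

text \<open>M(alpha,gamma) = liminf over nonzero integers n with |n| to infinity of |n| * ||n alpha - gamma||.
  The cofinite filter on int is exactly the filter of |n| \<rightarrow> \<infinity>.\<close>
definition M_inh :: "real \<Rightarrow> real \<Rightarrow> ereal" where
  "M_inh \<alpha> \<gamma> = Liminf cofinite (\<lambda>n::int. ereal (\<bar>real_of_int n\<bar> * dist_int (real_of_int n * \<alpha> - \<gamma>)))"

definition rho :: "real \<Rightarrow> ereal" where
  "rho \<alpha> = (SUP \<gamma>\<in>- {of_int m + \<alpha> * of_int k | m k :: int. True}. M_inh \<alpha> \<gamma>)"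

fun ncf_rem :: "real \<Rightarrow> nat \<Rightarrow> real" where
  "ncf_rem \<alpha> 0 = \<alpha>"
| "ncf_rem \<alpha> (Suc n) = of_int \<lceil>1 / ncf_rem \<alpha> n\<rceil> - 1 / ncf_rem \<alpha> n"

text \<open>Partial quotients a_i for i >= 1 (index 0 unused, set to 0).\<close>
fun ncf_a :: "real \<Rightarrow> nat \<Rightarrow> int" where
  "ncf_a \<alpha> 0 = 0"
| "ncf_a \<alpha> (Suc n) = \<lceil>1 / ncf_rem \<alpha> n\<rceil>"

text \<open>Shifted convergents: ncf_p' alpha n = p_(n-1), ncf_q' alpha n = q_(n-1).\<close>
fun ncf_p' :: "real \<Rightarrow> nat \<Rightarrow> int" where
  "ncf_p' \<alpha> 0 = -1"
| "ncf_p' \<alpha> (Suc 0) = 0"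
| "ncf_p' \<alpha> (Suc (Suc n)) = ncf_a \<alpha> (Suc n) * ncf_p' \<alpha> (Suc n) - ncf_p' \<alpha> n"

fun ncf_q' :: "real \<Rightarrow> nat \<Rightarrow> int" where
  "ncf_q' \<alpha> 0 = 0"
| "ncf_q' \<alpha> (Suc 0) = 1"
| "ncf_q' \<alpha> (Suc (Suc n)) = ncf_a \<alpha> (Suc n) * ncf_q' \<alpha> (Suc n) - ncf_q' \<alpha> n"

definition ncf_p :: "real \<Rightarrow> nat \<Rightarrow> int" where "ncf_p \<alpha> n = ncf_p' \<alpha> (Suc n)"
definition ncf_q :: "real \<Rightarrow> nat \<Rightarrow> int" where "ncf_q \<alpha> n = ncf_q' \<alpha> (Suc n)"

definition ncf_D :: "real \<Rightarrow> nat \<Rightarrow> real" where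
  "ncf_D \<alpha> n = of_int (ncf_q \<alpha> n) * \<alpha> - of_int (ncf_p \<alpha> n)"

definition ncf_t :: "real \<Rightarrow> nat \<Rightarrow> int" where
  "ncf_t \<alpha> i = (if even (ncf_a \<alpha> i) then 0
      else (-1) ^ (card {k \<in> {1..i}. odd (ncf_a \<alpha> k)} + 1))"

definition gamma_star :: "real \<Rightarrow> real" where
  "gamma_star \<alpha> = (\<Sum>i. (of_int (ncf_a \<alpha> (Suc i)) - 2 + of_int (ncf_t \<alpha> (Suc i))) / 2 * ncf_D \<alpha> i)"

definition beta_R :: "int \<Rightarrow> real" where
  "beta_R R = (if even R then (R - sqrt (R^2 - 4)) / 2 else (R + 1 - sqrt ((R+1)^2 - 4)) / 2)"

definition delta_R :: "int \<Rightarrow> real" where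
  "delta_R R = (if even R then 1 / (R + 1 - beta_R R) else 1 / (R - beta_R R))"

definition C_R :: "int \<Rightarrow> real" where
  "C_R R = (1 - 2 * delta_R R) * (1 - beta_R R) / (4 * (1 - delta_R R * beta_R R))"

end

theory Submission
  imports Defs
begin

lemma rem_props:
  assumes "0 < \<alpha>" "\<alpha> < 1" "\<alpha> \<notin> \<rat>"
  shows "0 < ncf_rem \<alpha> j \<and> ncf_rem \<alpha> j < 1 \<and> ncf_rem \<alpha> j \<notin> \<rat>"
proof (induction j)
  case 0 then show ?case using assms by simp
next
  case (Suc j)
  define x where "x = ncf_rem \<alpha> j"
  have x: "0 < x" "x < 1" "x \<notin> \<rat>" using Suc x_def by auto
  have ir: "1/x \<notin> \<rat>" using x(3) by (metis Rats_inverse inverse_eq_divide inverse_inverse_eq)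
  have ni: "1/x \<noteq> of_int \<lceil>1/x\<rceil>" using ir by (metis Rats_of_int)
  have c1: "of_int \<lceil>1/x\<rceil> - 1/x \<ge> 0" by linarith
  have c2: "of_int \<lceil>1/x\<rceil> - 1/x < 1" by linarith
  have "of_int \<lceil>1/x\<rceil> - 1/x \<notin> \<rat>"
  proof
    assume "of_int \<lceil>1/x\<rceil> - 1/x \<in> \<rat>"
    then have "of_int \<lceil>1/x\<rceil> - (of_int \<lceil>1/x\<rceil> - 1/x) \<in> \<rat>" using Rats_diff Rats_of_int by blast
    moreover have "of_int \<lceil>1/x\<rceil> - (of_int \<lceil>1/x\<rceil> - 1/x) = 1/x" by simp
    ultimately show False using ir by metis
  qed
  moreover have "of_int \<lceil>1/x\<rceil> - 1/x > 0" using c1 ni by linarith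
  ultimately show ?case using c2 x_def by simp
qed

context
  fixes \<alpha> :: real
  assumes a0: "0 < \<alpha>" and a1: "\<alpha> < 1" and aq: "\<alpha> \<notin> \<rat>"
begin

lemma rem_pos: "0 < ncf_rem \<alpha> j" using rem_props[OF a0 a1 aq] by blast
lemma rem_lt1: "ncf_rem \<alpha> j < 1" using rem_props[OF a0 a1 aq] by blast

lemma a_rem: "of_int (ncf_a \<alpha> (Suc j)) - ncf_rem \<alpha> (Suc j) = 1 / ncf_rem \<alpha> j"
  by simp

lemma a_ge2: "ncf_a \<alpha> (Suc j) \<ge> 2"
proof -
  have "1 / ncf_rem \<alpha> j > 1" using rem_pos[of j] rem_lt1[of j] by simp
  then show ?thesis by simp
qed

lemma rem_eq: "ncf_rem \<alpha> j = 1 / (of_int (ncf_a \<alpha> (Suc j)) - ncf_rem \<alpha> (Suc j))"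
  using rem_pos[of j] by (simp only: a_rem) simp

end

definition QQ :: "real \<Rightarrow> nat \<Rightarrow> real" where "QQ \<alpha> j = real_of_int (ncf_q' \<alpha> j)"
definition DD :: "real \<Rightarrow> nat \<Rightarrow> real" where "DD \<alpha> j = real_of_int (ncf_q' \<alpha> j) * \<alpha> - real_of_int (ncf_p' \<alpha> j)"
definition AA :: "real \<Rightarrow> nat \<Rightarrow> real" where "AA \<alpha> j = real_of_int (ncf_a \<alpha> j)"

lemma QQ_0[simp]: "QQ \<alpha> 0 = 0" and QQ_1[simp]: "QQ \<alpha> (Suc 0) = 1"
  by (simp_all add: QQ_def)
lemma QQ_rec: "QQ \<alpha> (Suc (Suc j)) = AA \<alpha> (Suc j) * QQ \<alpha> (Suc j) - QQ \<alpha> j"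
  by (simp add: QQ_def AA_def)
lemma DD_0[simp]: "DD \<alpha> 0 = 1" and DD_1[simp]: "DD \<alpha> (Suc 0) = \<alpha>"
  by (simp_all add: DD_def)
lemma DD_rec: "DD \<alpha> (Suc (Suc j)) = AA \<alpha> (Suc j) * DD \<alpha> (Suc j) - DD \<alpha> j"
  by (simp add: DD_def AA_def algebra_simps)
lemma det: "QQ \<alpha> (Suc j) * DD \<alpha> j - QQ \<alpha> j * DD \<alpha> (Suc j) = 1"
proof (induction j)
  case 0 then show ?case by simp
next
  case (Suc j) then show ?case by (simp add: QQ_rec DD_rec algebra_simps)
qed

lemma ncf_D_DD: "ncf_D \<alpha> n = DD \<alpha> (Suc n)"
  by (simp add: ncf_D_def DD_def ncf_q_def ncf_p_def)

definition cnt :: "real \<Rightarrow> nat \<Rightarrow> nat" where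
  "cnt \<alpha> j = card {k \<in> {1..j}. odd (ncf_a \<alpha> k)}"

lemma cnt_0[simp]: "cnt \<alpha> 0 = 0" by (simp add: cnt_def)
lemma cnt_Suc: "cnt \<alpha> (Suc j) = cnt \<alpha> j + (if odd (ncf_a \<alpha> (Suc j)) then 1 else 0)"
proof -
  have "{k \<in> {1..Suc j}. odd (ncf_a \<alpha> k)} =
        (if odd (ncf_a \<alpha> (Suc j)) then insert (Suc j) {k \<in> {1..j}. odd (ncf_a \<alpha> k)}
         else {k \<in> {1..j}. odd (ncf_a \<alpha> k)})" by (auto simp: le_Suc_eq)
  then show ?thesis by (simp add: cnt_def)
qed

definition TT :: "real \<Rightarrow> nat \<Rightarrow> real" where "TT \<alpha> j = real_of_int (ncf_t \<alpha> j)"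

lemma TT_even: "even (ncf_a \<alpha> j) \<Longrightarrow> TT \<alpha> j = 0"
  by (simp add: TT_def ncf_t_def)
lemma TT_odd: "odd (ncf_a \<alpha> (Suc j)) \<Longrightarrow> TT \<alpha> (Suc j) = (-1) ^ cnt \<alpha> j"
proof -
  assume o: "odd (ncf_a \<alpha> (Suc j))"
  have "ncf_t \<alpha> (Suc j) = (-1) ^ (cnt \<alpha> (Suc j) + 1)"
    using o by (simp add: ncf_t_def cnt_def)
  also have "\<dots> = (-1) ^ cnt \<alpha> j" using o by (simp add: cnt_Suc)
  finally show ?thesis by (simp add: TT_def)
qed

definition PHI :: "real \<Rightarrow> nat \<Rightarrow> real" where
  "PHI \<alpha> j = -1/2 + (\<Sum>i=1..j. TT \<alpha> i * QQ \<alpha> i / 2)"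

lemma PHI_0[simp]: "PHI \<alpha> 0 = -1/2" by (simp add: PHI_def)
lemma PHI_Suc: "PHI \<alpha> (Suc j) = PHI \<alpha> j + TT \<alpha> (Suc j) * QQ \<alpha> (Suc j) / 2"
  by (simp add: PHI_def)

context
  fixes \<alpha> :: real
  assumes a0: "0 < \<alpha>" and a1: "\<alpha> < 1" and aq: "\<alpha> \<notin> \<rat>"
begin

lemma AA_ge2: "AA \<alpha> (Suc j) \<ge> 2"
  using a_ge2[OF a0 a1 aq] by (simp add: AA_def)

lemma DD_Suc: "DD \<alpha> (Suc j) = ncf_rem \<alpha> j * DD \<alpha> j"
proof (induction j rule: nat_less_induct)
  case (1 j)
  show ?case
  proof (cases j)
    case 0 then show ?thesis by simp
  next
    case (Suc i)
    have ih: "DD \<alpha> (Suc i) = ncf_rem \<alpha> i * DD \<alpha> i" using 1 Suc by simp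
    have rp: "ncf_rem \<alpha> i > 0" using rem_pos[OF a0 a1 aq] by blast
    have "DD \<alpha> (Suc (Suc i)) = AA \<alpha> (Suc i) * DD \<alpha> (Suc i) - DD \<alpha> i" by (rule DD_rec)
    also have "DD \<alpha> i = DD \<alpha> (Suc i) / ncf_rem \<alpha> i" using ih rp by simp
    also have "AA \<alpha> (Suc i) = ncf_rem \<alpha> (Suc i) + 1 / ncf_rem \<alpha> i"
      using a_rem[OF a0 a1 aq, of i] by (simp add: AA_def)
    finally show ?thesis using Suc rp by (simp add: field_simps)
  qed
qed

lemma DD_pos: "DD \<alpha> j > 0"
proof (induction j)
  case 0 then show ?case by simp
next
  case (Suc j) then show ?case using DD_Suc[of j] rem_pos[OF a0 a1 aq, of j] by simp
qed

lemma DD_dec: "DD \<alpha> (Suc j) < DD \<alpha> j"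
  using DD_Suc[of j] rem_lt1[OF a0 a1 aq, of j] DD_pos[of j] by simp

lemma QQ_mono_aux: "QQ \<alpha> (Suc j) \<ge> QQ \<alpha> j + 1 \<and> QQ \<alpha> j \<ge> 0"
proof (induction j)
  case 0 then show ?case by simp
next
  case (Suc j)
  have "QQ \<alpha> (Suc (Suc j)) = AA \<alpha> (Suc j) * QQ \<alpha> (Suc j) - QQ \<alpha> j" by (rule QQ_rec)
  moreover have "AA \<alpha> (Suc j) * QQ \<alpha> (Suc j) \<ge> 2 * QQ \<alpha> (Suc j)"
    using AA_ge2[of j] Suc by (intro mult_right_mono) auto
  ultimately show ?case using Suc by linarith
qed

lemma QQ_Suc_ge: "QQ \<alpha> (Suc j) \<ge> QQ \<alpha> j + 1" using QQ_mono_aux by blast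
lemma QQ_nonneg: "QQ \<alpha> j \<ge> 0" using QQ_mono_aux by blast
lemma QQ_pos: "j \<ge> 1 \<Longrightarrow> QQ \<alpha> j \<ge> 1"
  using QQ_Suc_ge[of "j - 1"] QQ_nonneg[of "j-1"] by (cases j) auto

lemma PHI_bound: "j \<ge> 1 \<Longrightarrow> \<bar>PHI \<alpha> j\<bar> \<le> QQ \<alpha> j / 2 \<and> (even (cnt \<alpha> j) \<longrightarrow> PHI \<alpha> j \<le> 0)
    \<and> (odd (cnt \<alpha> j) \<longrightarrow> PHI \<alpha> j \<ge> 0)"
proof (induction j rule: dec_induct)
  case base
  show ?case
  proof (cases "odd (ncf_a \<alpha> 1)")
    case True
    then have "TT \<alpha> 1 = 1" using TT_odd[of \<alpha> 0] by simp
    then show ?thesis using True by (auto simp: PHI_Suc cnt_Suc abs_if)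
  next
    case False
    then have "TT \<alpha> 1 = 0" using TT_even by auto
    then show ?thesis using False by (auto simp: PHI_Suc cnt_Suc abs_if)
  qed
next
  case (step j)
  have q: "QQ \<alpha> (Suc j) \<ge> QQ \<alpha> j" using QQ_Suc_ge[of j] by simp
  have b1: "- QQ \<alpha> j / 2 \<le> PHI \<alpha> j" "PHI \<alpha> j \<le> QQ \<alpha> j / 2" using step.IH by (auto simp: abs_le_iff)
  show ?case
  proof (cases "odd (ncf_a \<alpha> (Suc j))")
    case True
    then have t: "TT \<alpha> (Suc j) = (-1) ^ cnt \<alpha> j" by (rule TT_odd)
    show ?thesis
    proof (cases "even (cnt \<alpha> j)")
      case True
      then show ?thesis using step.IH t q b1 \<open>odd (ncf_a \<alpha> (Suc j))\<close> by (simp add: PHI_Suc cnt_Suc abs_le_iff)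
    next
      case False
      then show ?thesis using step.IH t q b1 \<open>odd (ncf_a \<alpha> (Suc j))\<close> by (simp add: PHI_Suc cnt_Suc abs_le_iff)
    qed
  next
    case False
    then have "TT \<alpha> (Suc j) = 0" using TT_even by auto
    then show ?thesis using False step.IH q b1 by (simp add: PHI_Suc cnt_Suc abs_le_iff)
  qed
qed

end

lemma TT_abs: "\<bar>TT \<alpha> j\<bar> \<le> 1"
  by (simp add: TT_def ncf_t_def)

definition EE :: "real \<Rightarrow> nat \<Rightarrow> real" where
  "EE \<alpha> j = (\<Sum>i. TT \<alpha> (i + Suc j) * DD \<alpha> (i + Suc j) / 2)"

definition ES :: "real \<Rightarrow> nat \<Rightarrow> nat \<Rightarrow> real" where
  "ES \<alpha> N j = (\<Sum>i<N. TT \<alpha> (i + Suc j) * DD \<alpha> (i + Suc j) / 2)"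

lemma ES_Suc: "ES \<alpha> (Suc N) j = TT \<alpha> (Suc j) * DD \<alpha> (Suc j) / 2 + ES \<alpha> N (Suc j)"
  unfolding ES_def by (subst sum.lessThan_Suc_shift) simp

declare ncf_rem.simps(2)[simp del] ncf_a.simps(2)[simp del]

locale ncf_ev =
  fixes \<alpha> :: real and K :: nat
  assumes a0: "0 < \<alpha>" and a1: "\<alpha> < 1" and aq: "\<alpha> \<notin> \<rat>"
    and K1: "K \<ge> 1" and aK: "\<And>i. i \<ge> K \<Longrightarrow> AA \<alpha> i \<ge> 3"
begin

lemma rem_pos': "0 < ncf_rem \<alpha> j" using rem_pos[OF a0 a1 aq] .
lemma rem_lt1': "ncf_rem \<alpha> j < 1" using rem_lt1[OF a0 a1 aq] .

lemma rem_eq': "ncf_rem \<alpha> j = 1 / (AA \<alpha> (Suc j) - ncf_rem \<alpha> (Suc j))"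
  using rem_eq[OF a0 a1 aq, of j] by (simp add: AA_def)

lemma rem_le_half: "Suc j \<ge> K \<Longrightarrow> ncf_rem \<alpha> j \<le> 1/2"
proof -
  assume "Suc j \<ge> K"
  then have "AA \<alpha> (Suc j) \<ge> 3" by (rule aK)
  moreover have "ncf_rem \<alpha> (Suc j) < 1" by (rule rem_lt1')
  ultimately have "AA \<alpha> (Suc j) - ncf_rem \<alpha> (Suc j) \<ge> 2" by linarith
  then show ?thesis by (subst rem_eq') (simp add: field_simps)
qed

lemma rem_le_25: "j \<ge> K \<Longrightarrow> ncf_rem \<alpha> j \<le> 2/5"
proof -
  assume "j \<ge> K"
  then have "AA \<alpha> (Suc j) \<ge> 3" using aK by simp
  moreover have "ncf_rem \<alpha> (Suc j) \<le> 1/2" using \<open>j \<ge> K\<close> by (intro rem_le_half) simp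
  ultimately have "AA \<alpha> (Suc j) - ncf_rem \<alpha> (Suc j) \<ge> 5/2" by linarith
  then show ?thesis by (subst rem_eq') (simp add: field_simps)
qed

lemma DD_pos': "DD \<alpha> j > 0" using DD_pos[OF a0 a1 aq] .
lemma DD_Suc': "DD \<alpha> (Suc j) = ncf_rem \<alpha> j * DD \<alpha> j" using DD_Suc[OF a0 a1 aq] .

lemma DD_half: "j \<ge> K \<Longrightarrow> DD \<alpha> (Suc j) \<le> DD \<alpha> j / 2"
  using DD_Suc'[of j] rem_le_half[of j] DD_pos'[of j]
  by (simp add: mult_right_mono)

lemma DD_geom: "DD \<alpha> (K + i) \<le> DD \<alpha> K * (1/2)^i"
proof (induction i)
  case 0 then show ?case by simp
next
  case (Suc i)
  have "DD \<alpha> (K + Suc i) \<le> DD \<alpha> (K + i) / 2" using DD_half[of "K+i"] by simp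
  then show ?case using Suc by simp
qed

lemma DD_summable: "summable (\<lambda>i. DD \<alpha> i)"
proof (rule summable_comparison_test')
  show "summable (\<lambda>i. DD \<alpha> K * 2^K * (1/2)^i)"
    by (intro summable_mult summable_geometric) simp
  show "norm (DD \<alpha> i) \<le> DD \<alpha> K * 2^K * (1/2)^i" if "i \<ge> K" for i
  proof -
    have "DD \<alpha> i = DD \<alpha> (K + (i - K))" using that by simp
    also have "\<dots> \<le> DD \<alpha> K * (1/2)^(i-K)" by (rule DD_geom)
    also have "(1/2::real)^(i-K) = 2^K * (1/2)^i"
    proof -
      have "(2::real)^K * (1/2)^i = 2^K * ((1/2)^(i-K) * (1/2)^K)"
        using that by (simp add: power_add[symmetric])
      also have "\<dots> = (1/2)^(i-K) * (2^K * (1/2)^K)" by (simp only: ac_simps)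
      also have "(2::real)^K * (1/2)^K = 1" by (simp add: power_mult_distrib[symmetric])
      finally show ?thesis by simp
    qed
    finally show ?thesis using DD_pos'[of i] by simp
  qed
qed

lemma DD_tendsto: "(\<lambda>i. DD \<alpha> i) \<longlonglongrightarrow> 0"
  using DD_summable summable_LIMSEQ_zero by blast

lemma summable_shift_DD: "summable (\<lambda>i. DD \<alpha> (i + k))"
  using DD_summable summable_iff_shift by blast

lemma summable_TD: "summable (\<lambda>i. TT \<alpha> (i + k) * DD \<alpha> (i + k) / 2)"
proof (rule summable_comparison_test')
  show "summable (\<lambda>i. DD \<alpha> (i + k))" by (rule summable_shift_DD)
  show "norm (TT \<alpha> (i + k) * DD \<alpha> (i + k) / 2) \<le> DD \<alpha> (i + k)" for i
  proof -
    have "\<bar>TT \<alpha> (i + k)\<bar> * DD \<alpha> (i + k) \<le> 1 * DD \<alpha> (i+k)"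
      using TT_abs DD_pos' by (intro mult_right_mono) (auto simp: less_imp_le)
    then show ?thesis using DD_pos'[of "i+k"] by (simp add: abs_mult)
  qed
qed

lemma ES_tendsto: "(\<lambda>N. ES \<alpha> N j) \<longlonglongrightarrow> EE \<alpha> j"
  unfolding ES_def EE_def using summable_TD[of "Suc j"] summable_LIMSEQ by blast

lemma EE_rec: "EE \<alpha> j = TT \<alpha> (Suc j) * DD \<alpha> (Suc j) / 2 + EE \<alpha> (Suc j)"
proof -
  have s: "summable (\<lambda>i. TT \<alpha> (i + Suc j) * DD \<alpha> (i + Suc j) / 2)" by (rule summable_TD)
  have "(\<Sum>i. TT \<alpha> (Suc i + Suc j) * DD \<alpha> (Suc i + Suc j) / 2) =
        (\<Sum>i. TT \<alpha> (i + Suc j) * DD \<alpha> (i + Suc j) / 2) - TT \<alpha> (Suc j) * DD \<alpha> (Suc j) / 2"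
    using suminf_split_head[OF s] by simp
  moreover have "(\<lambda>i. TT \<alpha> (Suc i + Suc j) * DD \<alpha> (Suc i + Suc j) / 2) =
      (\<lambda>i. TT \<alpha> (i + Suc (Suc j)) * DD \<alpha> (i + Suc (Suc j)) / 2)" by simp
  ultimately show ?thesis unfolding EE_def by simp
qed

lemma ES_bound: "\<bar>ES \<alpha> N j\<bar> \<le> DD \<alpha> (Suc j) / 2 \<and> (even (cnt \<alpha> j) \<longrightarrow> ES \<alpha> N j \<ge> 0)
    \<and> (odd (cnt \<alpha> j) \<longrightarrow> ES \<alpha> N j \<le> 0)"
proof (induction N arbitrary: j)
  case 0 then show ?case using DD_pos'[of "Suc j"] by (simp add: ES_def)
next
  case (Suc N)
  have b1: "- DD \<alpha> (Suc (Suc j)) / 2 \<le> ES \<alpha> N (Suc j)" "ES \<alpha> N (Suc j) \<le> DD \<alpha> (Suc (Suc j)) / 2"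
    using Suc.IH[of "Suc j"] by (auto simp: abs_le_iff)
  have d: "DD \<alpha> (Suc (Suc j)) \<le> DD \<alpha> (Suc j)" using DD_dec[OF a0 a1 aq, of "Suc j"] by simp
  show ?case
  proof (cases "odd (ncf_a \<alpha> (Suc j))")
    case True
    then have t: "TT \<alpha> (Suc j) = (-1) ^ cnt \<alpha> j" by (rule TT_odd)
    show ?thesis
    proof (cases "even (cnt \<alpha> j)")
      case True
      then show ?thesis using Suc.IH[of "Suc j"] t d b1 \<open>odd (ncf_a \<alpha> (Suc j))\<close>
        by (simp add: ES_Suc cnt_Suc abs_le_iff)
    next
      case False
      then show ?thesis using Suc.IH[of "Suc j"] t d b1 \<open>odd (ncf_a \<alpha> (Suc j))\<close>
        by (simp add: ES_Suc cnt_Suc abs_le_iff)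
    qed
  next
    case False
    then have "TT \<alpha> (Suc j) = 0" using TT_even by auto
    then show ?thesis using False Suc.IH[of "Suc j"] d b1 by (simp add: ES_Suc cnt_Suc abs_le_iff)
  qed
qed

lemma EE_bound: "\<bar>EE \<alpha> j\<bar> \<le> DD \<alpha> (Suc j) / 2 \<and> (even (cnt \<alpha> j) \<longrightarrow> EE \<alpha> j \<ge> 0)
    \<and> (odd (cnt \<alpha> j) \<longrightarrow> EE \<alpha> j \<le> 0)"
proof -
  have L: "(\<lambda>N. ES \<alpha> N j) \<longlonglongrightarrow> EE \<alpha> j" by (rule ES_tendsto)
  have B1: "\<forall>N. ES \<alpha> N j \<le> DD \<alpha> (Suc j) / 2" "\<forall>N. - (DD \<alpha> (Suc j) / 2) \<le> ES \<alpha> N j"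
  proof -
    have "\<bar>ES \<alpha> N j\<bar> \<le> DD \<alpha> (Suc j) / 2" for N using ES_bound by blast
    then show "\<forall>N. ES \<alpha> N j \<le> DD \<alpha> (Suc j) / 2" "\<forall>N. - (DD \<alpha> (Suc j) / 2) \<le> ES \<alpha> N j"
      by (meson abs_le_D1, meson abs_le_D2 minus_le_iff)
  qed
  have u: "EE \<alpha> j \<le> DD \<alpha> (Suc j) / 2"
    by (rule LIMSEQ_le_const2[OF L]) (use B1 in blast)
  have l: "- (DD \<alpha> (Suc j) / 2) \<le> EE \<alpha> j"
    by (rule LIMSEQ_le_const[OF L]) (use B1 in blast)
  have p: "even (cnt \<alpha> j) \<Longrightarrow> EE \<alpha> j \<ge> 0"
  proof -
    assume "even (cnt \<alpha> j)"
    then have "\<forall>N. 0 \<le> ES \<alpha> N j" using ES_bound by blast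
    then show ?thesis by (intro LIMSEQ_le_const[OF L]) blast
  qed
  have n: "odd (cnt \<alpha> j) \<Longrightarrow> EE \<alpha> j \<le> 0"
  proof -
    assume "odd (cnt \<alpha> j)"
    then have "\<forall>N. ES \<alpha> N j \<le> 0" using ES_bound by blast
    then show ?thesis by (intro LIMSEQ_le_const2[OF L]) blast
  qed
  show ?thesis using u l p n by (auto simp: abs_le_iff)
qed

lemma gamma_star_eq: "gamma_star \<alpha> = (1 - \<alpha>) / 2 + EE \<alpha> 0"
proof -
  define S where "S = (\<Sum>i. DD \<alpha> i)"
  have sD: "(\<lambda>i. DD \<alpha> i) sums S" using DD_summable S_def summable_sums by blast
  have s1: "(\<lambda>i. DD \<alpha> (Suc i)) sums (S - 1)"
    using sums_Suc_iff[of "\<lambda>i. DD \<alpha> i" "S - 1"] sD by simp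
  have s2: "(\<lambda>i. DD \<alpha> (Suc (Suc i))) sums (S - 1 - \<alpha>)"
    using sums_Suc_iff[of "\<lambda>i. DD \<alpha> (Suc i)" "S - 1 - \<alpha>"] s1 by simp
  have s3: "(\<lambda>i. (DD \<alpha> (Suc (Suc i)) + DD \<alpha> i - 2 * DD \<alpha> (Suc i)) / 2) sums
      (((S - 1 - \<alpha>) + S - 2 * (S - 1)) / 2)"
    by (intro sums_divide sums_diff sums_add sums_mult s1 s2 sD)
  have e: "((S - 1 - \<alpha>) + S - 2 * (S - 1)) / 2 = (1 - \<alpha>) / 2" by simp
  have s3': "(\<lambda>i. (AA \<alpha> (Suc i) - 2) / 2 * DD \<alpha> (Suc i)) sums ((1 - \<alpha>) / 2)"
  proof -
    have "(\<lambda>i. (DD \<alpha> (Suc (Suc i)) + DD \<alpha> i - 2 * DD \<alpha> (Suc i)) / 2) =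
          (\<lambda>i. (AA \<alpha> (Suc i) - 2) / 2 * DD \<alpha> (Suc i))"
      by (rule ext) (simp add: DD_rec algebra_simps)
    then show ?thesis using s3 e by simp
  qed
  have s4: "(\<lambda>i. TT \<alpha> (i + Suc 0) * DD \<alpha> (i + Suc 0) / 2) sums EE \<alpha> 0"
    unfolding EE_def using summable_TD[of "Suc 0"] summable_sums by blast
  have s5: "(\<lambda>i. (AA \<alpha> (Suc i) - 2) / 2 * DD \<alpha> (Suc i) + TT \<alpha> (i + Suc 0) * DD \<alpha> (i + Suc 0) / 2)
      sums ((1 - \<alpha>) / 2 + EE \<alpha> 0)"
    by (intro sums_add s3' s4)
  have "(\<lambda>i. (AA \<alpha> (Suc i) - 2) / 2 * DD \<alpha> (Suc i) + TT \<alpha> (i + Suc 0) * DD \<alpha> (i + Suc 0) / 2) =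
      (\<lambda>i. (of_int (ncf_a \<alpha> (Suc i)) - 2 + of_int (ncf_t \<alpha> (Suc i))) / 2 * ncf_D \<alpha> i)"
    by (rule ext) (simp add: AA_def TT_def ncf_D_DD field_simps)
  then show ?thesis using s5 unfolding gamma_star_def by (simp add: sums_iff)
qed

end

fun OSq :: "real \<Rightarrow> int \<Rightarrow> int \<Rightarrow> nat \<Rightarrow> int" where
  "OSq \<alpha> n m 0 = 2 * n + 1"
| "OSq \<alpha> n m (Suc 0) = 2 * m + 1"
| "OSq \<alpha> n m (Suc (Suc j)) = ncf_a \<alpha> (Suc j) * OSq \<alpha> n m (Suc j) - OSq \<alpha> n m j + ncf_t \<alpha> (Suc j)"

definition WW :: "real \<Rightarrow> int \<Rightarrow> int \<Rightarrow> nat \<Rightarrow> real" where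
  "WW \<alpha> n m j = real_of_int (OSq \<alpha> n m j) / 2"

lemma WW_rec: "WW \<alpha> n m (Suc (Suc j)) = AA \<alpha> (Suc j) * WW \<alpha> n m (Suc j) - WW \<alpha> n m j + TT \<alpha> (Suc j) / 2"
  by (simp add: WW_def AA_def TT_def field_simps)

lemma t_odd: "odd (ncf_a \<alpha> i) \<Longrightarrow> odd (ncf_t \<alpha> i)"
  by (simp add: ncf_t_def)

lemma t_even: "even (ncf_a \<alpha> i) \<Longrightarrow> ncf_t \<alpha> i = 0"
  by (simp add: ncf_t_def)

lemma OO_odd: "odd (OSq \<alpha> n m j)"
proof (induction \<alpha> n m j rule: OSq.induct)
  case (1 \<alpha> n m) then show ?case by simp
next
  case (2 \<alpha> n m) then show ?case by simp
next
  case (3 \<alpha> n m j)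
  show ?case
  proof (cases "odd (ncf_a \<alpha> (Suc j))")
    case True
    then have "odd (ncf_t \<alpha> (Suc j))" by (rule t_odd)
    then show ?thesis using True 3 by simp
  next
    case False
    then show ?thesis using 3 t_even[of \<alpha> "Suc j"] by simp
  qed
qed

definition Pp :: "real \<Rightarrow> real \<Rightarrow> real \<Rightarrow> real \<Rightarrow> real \<Rightarrow> real \<Rightarrow> real \<Rightarrow> real \<Rightarrow> real" where
  "Pp q0 q1 d0 d1 ph e x y = (q1 * x - q0 * y + ph) * (d0 * y - d1 * x + e)"

context ncf_ev
begin

lemma inv1: "real_of_int n = QQ \<alpha> (Suc j) * WW \<alpha> n m j - QQ \<alpha> j * WW \<alpha> n m (Suc j) + PHI \<alpha> j"
proof (induction j)
  case 0 then show ?case by (simp add: WW_def field_simps)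
next
  case (Suc j)
  show ?case using Suc by (simp add: QQ_rec WW_rec PHI_Suc algebra_simps)
qed

lemma inv2: "real_of_int m - \<alpha> * real_of_int n + gamma_star \<alpha> =
   DD \<alpha> j * WW \<alpha> n m (Suc j) - DD \<alpha> (Suc j) * WW \<alpha> n m j + EE \<alpha> j"
proof (induction j)
  case 0 then show ?case by (simp add: WW_def gamma_star_eq field_simps)
next
  case (Suc j)
  show ?case using Suc EE_rec[of j] by (simp add: DD_rec WW_rec algebra_simps)
qed

lemma prod_eq: "real_of_int n * (real_of_int m - \<alpha> * real_of_int n + gamma_star \<alpha>) =
   Pp (QQ \<alpha> j) (QQ \<alpha> (Suc j)) (DD \<alpha> j) (DD \<alpha> (Suc j)) (PHI \<alpha> j) (EE \<alpha> j) (WW \<alpha> n m j) (WW \<alpha> n m (Suc j))"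
  unfolding Pp_def by (subst inv1[of n j m], subst inv2[of m n j]) (rule refl)

end

lemma opp_bound:
  fixes q0 q1 d0 d1 ph e x y :: real
  assumes "q0 \<ge> 0" "d1 \<ge> 0" "\<bar>ph\<bar> \<le> q0/2" "\<bar>e\<bar> \<le> d1/2"
    "\<bar>x\<bar> \<ge> 1/2" "\<bar>y\<bar> \<ge> 1/2" "x * y < 0" "q1 * d0 - q0 * d1 = 1" "q1 \<ge> 0" "d0 \<ge> 0"
  shows "\<bar>Pp q0 q1 d0 d1 ph e x y\<bar> \<ge> 1/4"
proof -
  have "q0 * d1 \<ge> 0" using assms(1,2) by simp
  then have qd: "q1 * d0 \<ge> 1" using assms(8) by linarith
  have ph: "- q0/2 \<le> ph" "ph \<le> q0/2" "-d1/2 \<le> e" "e \<le> d1/2" using assms(3,4) by (auto simp: abs_le_iff)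
  consider "x > 0" "y < 0" | "x < 0" "y > 0" using assms(7) by (auto simp: mult_less_0_iff)
  then show ?thesis
  proof cases
    case 1
    then have xy: "x \<ge> 1/2" "-y \<ge> 1/2" using assms(5,6) by auto
    have A: "q1 * x - q0 * y + ph \<ge> q1 / 2"
    proof -
      have "q1 * x \<ge> q1 * (1/2)" using xy assms(9) by (intro mult_left_mono) auto
      moreover have "q0 * (-y) \<ge> q0 * (1/2)" using xy assms(1) by (intro mult_left_mono) auto
      ultimately show ?thesis using ph by (simp add: algebra_simps)
    qed
    have B: "-(d0 * y - d1 * x + e) \<ge> d0 / 2"
    proof -
      have "d0 * (-y) \<ge> d0 * (1/2)" using xy assms(10) by (intro mult_left_mono) auto
      moreover have "d1 * x \<ge> d1 * (1/2)" using xy assms(2) by (intro mult_left_mono) auto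
      ultimately show ?thesis using ph by (simp add: algebra_simps)
    qed
    have "(q1/2) * (d0/2) \<le> (q1 * x - q0 * y + ph) * (-(d0 * y - d1 * x + e))"
      using A B assms(9,10) by (intro mult_mono) auto
    then have "(q1 * x - q0 * y + ph) * (-(d0 * y - d1 * x + e)) \<ge> 1/4" using qd by simp
    then have "-Pp q0 q1 d0 d1 ph e x y \<ge> 1/4" unfolding Pp_def by (metis mult_minus_right)
    then show ?thesis by linarith
  next
    case 2
    then have xy: "-x \<ge> 1/2" "y \<ge> 1/2" using assms(5,6) by auto
    have A: "-(q1 * x - q0 * y + ph) \<ge> q1 / 2"
    proof -
      have "q1 * (-x) \<ge> q1 * (1/2)" using xy assms(9) by (intro mult_left_mono) auto
      moreover have "q0 * y \<ge> q0 * (1/2)" using xy assms(1) by (intro mult_left_mono) auto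
      ultimately show ?thesis using ph by (simp add: algebra_simps)
    qed
    have B: "(d0 * y - d1 * x + e) \<ge> d0 / 2"
    proof -
      have "d0 * y \<ge> d0 * (1/2)" using xy assms(10) by (intro mult_left_mono) auto
      moreover have "d1 * (-x) \<ge> d1 * (1/2)" using xy assms(2) by (intro mult_left_mono) auto
      ultimately show ?thesis using ph by (simp add: algebra_simps)
    qed
    have "(q1/2) * (d0/2) \<le> (-(q1 * x - q0 * y + ph)) * (d0 * y - d1 * x + e)"
      using A B assms(9,10) by (intro mult_mono) auto
    then have "(-(q1 * x - q0 * y + ph)) * (d0 * y - d1 * x + e) \<ge> 1/4" using qd by simp
    then have "-Pp q0 q1 d0 d1 ph e x y \<ge> 1/4" unfolding Pp_def by (metis mult_minus_left)
    then show ?thesis by linarith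
  qed
qed

lemma Pp_shift:
  assumes "q2 = a*q1 - q0" "d2 = a*d1 - d0" "ph1 = ph0 + t*q1/2" "e0 = e1 + t*d1/2"
  shows "Pp q0 q1 d0 d1 ph0 e0 x y = Pp q1 q2 d1 d2 ph1 e1 y (a*y - x + t/2)"
  unfolding Pp_def assms by (simp add: algebra_simps)

lemma Pp_diag_mono:
  assumes "y \<ge> 1/2" "q1 - q0 \<ge> 0" "d0 - d1 \<ge> 0" "(q1-q0)/2 + ph \<ge> 0" "(d0-d1)/2 + e \<ge> 0"
  shows "Pp q0 q1 d0 d1 ph e y y \<ge> Pp q0 q1 d0 d1 ph e (1/2) (1/2)"
proof -
  have A: "(q1 - q0) * y + ph \<ge> (q1-q0)/2 + ph"
    using mult_left_mono[OF assms(1) assms(2)] by simp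
  have B: "(d0 - d1) * y + e \<ge> (d0-d1)/2 + e"
    using mult_left_mono[OF assms(1) assms(3)] by simp
  have "((q1-q0)/2 + ph) * ((d0-d1)/2 + e) \<le> ((q1 - q0) * y + ph) * ((d0 - d1) * y + e)"
    using A B assms(4,5) by (intro mult_mono) linarith+
  moreover have "Pp q0 q1 d0 d1 ph e y y = ((q1 - q0) * y + ph) * ((d0 - d1) * y + e)"
    by (simp add: Pp_def algebra_simps)
  moreover have "Pp q0 q1 d0 d1 ph e (1/2) (1/2) = ((q1-q0)/2 + ph) * ((d0-d1)/2 + e)"
    by (simp add: Pp_def field_simps)
  ultimately show ?thesis by simp
qed

lemma concave_min:
  fixes p r c u l h x :: real
  assumes "p \<ge> 0" "r \<ge> 0" "l \<le> x" "x \<le> h"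
  shows "(p*x + c) * (u - r*x) \<ge> min ((p*l + c) * (u - r*l)) ((p*h + c) * (u - r*h))"
proof (cases "l = h")
  case True then show ?thesis using assms by auto
next
  case False
  then have hl: "h - l > 0" using assms by simp
  define f where "f z = (p*z + c) * (u - r*z)" for z
  have id: "(h-l) * f x - (h-x) * f l - (x-l) * f h = p*r*(x-l)*(h-x)*(h-l)"
    unfolding f_def by (simp add: algebra_simps)
  have "p*r*(x-l)*(h-x)*(h-l) \<ge> 0" using assms hl by simp
  then have "(h-l) * f x \<ge> (h-x) * f l + (x-l) * f h" using id by linarith
  moreover have "(h-x) * f l + (x-l) * f h \<ge> (h-x) * min (f l) (f h) + (x-l) * min (f l) (f h)"
    using assms by (intro add_mono mult_left_mono) auto
  ultimately have "(h-l) * f x \<ge> (h-l) * min (f l) (f h)" by (simp add: algebra_simps)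
  then have "f x \<ge> min (f l) (f h)" using hl by simp
  then show ?thesis unfolding f_def .
qed

lemma valley:
  assumes "q2 = a*q1 - q0" "d2 = a*d1 - d0" "ph1 = ph0 + t*q1/2" "e0 = e1 + t*d1/2"
    "y \<ge> 1/2" "x \<ge> y" "a*y - x + t/2 \<ge> y"
    "q1 \<ge> 0" "d1 \<ge> 0" "q1 - q0 \<ge> 0" "d0 - d1 \<ge> 0" "q2 - q1 \<ge> 0" "d1 - d2 \<ge> 0"
    "(q1-q0)/2 + ph0 \<ge> 0" "(d0-d1)/2 + e0 \<ge> 0" "(q2-q1)/2 + ph1 \<ge> 0" "(d1-d2)/2 + e1 \<ge> 0"
  shows "Pp q0 q1 d0 d1 ph0 e0 x y \<ge> min (Pp q0 q1 d0 d1 ph0 e0 (1/2) (1/2)) (Pp q1 q2 d1 d2 ph1 e1 (1/2) (1/2))"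
proof -
  define h where "h = (a - 1) * y + t/2"
  have xh: "x \<le> h" using assms(7) by (simp add: h_def algebra_simps)
  have cm: "(q1*x + (ph0 - q0*y)) * ((d0*y + e0) - d1*x) \<ge>
     min ((q1*y + (ph0 - q0*y)) * ((d0*y + e0) - d1*y)) ((q1*h + (ph0 - q0*y)) * ((d0*y + e0) - d1*h))"
    using assms(6,8,9) xh by (intro concave_min) auto
  have e1: "Pp q0 q1 d0 d1 ph0 e0 x y = (q1*x + (ph0 - q0*y)) * ((d0*y + e0) - d1*x)"
    unfolding Pp_def by (simp add: algebra_simps)
  have e2: "Pp q0 q1 d0 d1 ph0 e0 y y = (q1*y + (ph0 - q0*y)) * ((d0*y + e0) - d1*y)"
    unfolding Pp_def by (simp add: algebra_simps)
  have e3: "Pp q0 q1 d0 d1 ph0 e0 h y = (q1*h + (ph0 - q0*y)) * ((d0*y + e0) - d1*h)"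
    unfolding Pp_def by (simp add: algebra_simps)
  have e4: "Pp q0 q1 d0 d1 ph0 e0 h y = Pp q1 q2 d1 d2 ph1 e1 y y"
  proof -
    have "Pp q0 q1 d0 d1 ph0 e0 h y = Pp q1 q2 d1 d2 ph1 e1 y (a*y - h + t/2)"
      by (rule Pp_shift[OF assms(1-4)])
    moreover have "a*y - h + t/2 = y" by (simp add: h_def algebra_simps)
    ultimately show ?thesis by simp
  qed
  have m1: "Pp q0 q1 d0 d1 ph0 e0 y y \<ge> Pp q0 q1 d0 d1 ph0 e0 (1/2) (1/2)"
    using assms by (intro Pp_diag_mono) auto
  have m2: "Pp q1 q2 d1 d2 ph1 e1 y y \<ge> Pp q1 q2 d1 d2 ph1 e1 (1/2) (1/2)"
    using assms by (intro Pp_diag_mono) auto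
  show ?thesis using cm e1 e2 e3 e4 m1 m2 by (smt (verit))
qed

lemma psi_bound:
  fixes P G bs dl eta T :: real
  assumes "0 \<le> P" "P \<le> bs + eta" "0 \<le> G" "G \<le> dl + eta" "P \<le> 2/5"
    "0 < bs" "bs \<le> 2/5" "0 < dl" "dl \<le> 2/5" "0 \<le> eta" "eta \<le> 1/25"
    "T = (1 - bs) * (1 - 2*dl) / (1 - bs * dl)"
  shows "(1 - P) * (1 - 2*G) \<ge> T * (1 - P*G) - 3 * eta"
proof -
  define psi where "psi p g = (1 - p) * (1 - 2*g) - T * (1 - p*g)" for p g
  have bd: "1 - bs * dl > 0" proof -
    have "bs*dl \<le> (2/5)*(2/5)" using assms by (intro mult_mono) auto
    then show ?thesis by linarith
  qed
  have T0: "T \<ge> 0" using assms bd by simp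
  have T1: "T \<le> 1 - 2*dl"
  proof -
    have "bs * dl \<le> bs * 1" using assms by (intro mult_left_mono) auto
    then have "(1 - bs) \<le> (1 - bs * dl)" by simp
    then have "(1 - bs) * (1 - 2*dl) \<le> (1 - bs * dl) * (1 - 2*dl)" using assms by (intro mult_right_mono) auto
    then show ?thesis using bd assms(12) by (simp add: divide_le_eq mult.commute)
  qed
  have c1: "(2 + T) * (dl + eta) \<le> 1"
  proof -
    have "(2 + T) * (dl + eta) \<le> (3 - 2*dl) * (dl + eta)" using T1 assms by (intro mult_right_mono) auto
    also have "\<dots> = (3 - 2*dl) * dl + (3 - 2*dl) * eta" by (simp add: algebra_simps)
    also have "(3 - 2*dl) * dl \<le> 22/25"
    proof -
      have "(3 - 2*dl) * dl - 22/25 = -(2/5 - dl) * (11/5 - 2*dl)" by (simp add: field_simps)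
      moreover have "(2/5 - dl) * (11/5 - 2*dl) \<ge> 0" using assms by (intro mult_nonneg_nonneg) auto
      ultimately show ?thesis by linarith
    qed
    also have "(3 - 2*dl) * eta \<le> 3 * (1/25)" using assms by (intro mult_mono) auto
    finally show ?thesis by simp
  qed
  have c2: "(2 + T) * P \<le> 2"
  proof -
    have "(2 + T) * P \<le> 3 * (2/5)" using T1 assms by (intro mult_mono) auto
    then show ?thesis by simp
  qed
  have s1: "psi P G \<ge> psi P (dl + eta)"
  proof -
    have "psi P G - psi P (dl + eta) = (G - (dl + eta)) * ((2 + T) * P - 2)"
      unfolding psi_def by (simp add: algebra_simps)
    moreover have "(G - (dl + eta)) * ((2 + T) * P - 2) \<ge> 0"
      using assms(4) c2 by (intro mult_nonpos_nonpos) auto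
    ultimately show ?thesis by linarith
  qed
  have s2: "psi P (dl + eta) \<ge> psi (bs + eta) (dl + eta)"
  proof -
    have "psi P (dl + eta) - psi (bs + eta) (dl + eta) = (P - (bs + eta)) * ((2 + T) * (dl + eta) - 1)"
      unfolding psi_def by (simp add: algebra_simps)
    moreover have "(P - (bs + eta)) * ((2 + T) * (dl + eta) - 1) \<ge> 0"
      using assms(2) c1 by (intro mult_nonpos_nonpos) auto
    ultimately show ?thesis by linarith
  qed
  have z: "psi bs dl = 0" unfolding psi_def using assms(12) bd by simp
  have s3: "psi (bs + eta) (dl + eta) \<ge> -3 * eta"
  proof -
    have "psi (bs + eta) (dl + eta) = psi bs dl + eta * ((2+T)*dl - 1) + eta * ((2+T)*bs - 2) + (2+T)*eta*eta"
      unfolding psi_def by (simp add: algebra_simps)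
    moreover have "eta * ((2+T)*dl - 1) \<ge> eta * (-1)" using assms T0 by (intro mult_left_mono) auto
    moreover have "eta * ((2+T)*bs - 2) \<ge> eta * (-2)" using assms T0 by (intro mult_left_mono) auto
    moreover have "(2+T)*eta*eta \<ge> 0" using assms T0 by simp
    ultimately show ?thesis using z by linarith
  qed
  show ?thesis using s1 s2 s3 unfolding psi_def by linarith
qed

lemma H_bound:
  fixes s al f e bs dl eta :: real
  assumes "0 \<le> s" "0 \<le> al" "\<bar>f\<bar> \<le> s/2" "\<bar>e\<bar> \<le> al/2" "f * e \<le> 0" "s \<le> 2/5" "al \<le> 2/5"
    "s - 2*\<bar>f\<bar> \<le> bs + eta" "s/2 + \<bar>f\<bar> \<le> dl + eta" "al - 2*\<bar>e\<bar> \<le> bs + eta" "al/2 + \<bar>e\<bar> \<le> dl + eta"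
    "0 < bs" "bs \<le> 2/5" "0 < dl" "dl \<le> 2/5" "0 \<le> eta" "eta \<le> 1/25"
  shows "(1 - s + 2*f) * (1 - al + 2*e) \<ge> (1 - bs) * (1 - 2*dl) / (1 - bs * dl) * (1 - s*al) - 3 * eta"
proof -
  define T where "T = (1 - bs) * (1 - 2*dl) / (1 - bs * dl)"
  have bd: "1 - bs * dl > 0" proof -
    have "bs*dl \<le> (2/5)*(2/5)" using assms by (intro mult_mono) auto
    then show ?thesis by linarith
  qed
  have T0: "T \<ge> 0" using assms bd by (simp add: T_def)
  consider "f \<ge> 0" "e \<le> 0" | "f \<le> 0" "e \<ge> 0" using assms(5) by (auto simp: mult_le_0_iff)
  then show ?thesis
  proof cases
    case 1
    define P where "P = s - 2*f"
    define G where "G = al/2 - e"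
    have fe: "\<bar>f\<bar> = f" "\<bar>e\<bar> = -e" using 1 by auto
    have PG: "0 \<le> P" "P \<le> s" "0 \<le> G" "G \<le> al" using assms(3,4) 1 fe by (auto simp: P_def G_def)
    have "(1 - P) * (1 - 2*G) \<ge> T * (1 - P*G) - 3 * eta"
      using assms fe PG by (intro psi_bound[OF _ _ _ _ _ _ _ _ _ _ _ T_def]) (auto simp: P_def G_def)
    moreover have "P*G \<le> s*al" using PG by (intro mult_mono) auto
    then have "T * (1 - P*G) \<ge> T * (1 - s*al)" using T0 by (intro mult_left_mono) auto
    moreover have "(1 - s + 2*f) * (1 - al + 2*e) = (1 - P) * (1 - 2*G)" by (simp add: P_def G_def algebra_simps)
    ultimately show ?thesis unfolding T_def by linarith
  next
    case 2
    define P where "P = al - 2*e"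
    define G where "G = s/2 - f"
    have fe: "\<bar>f\<bar> = -f" "\<bar>e\<bar> = e" using 2 by auto
    have PG: "0 \<le> P" "P \<le> al" "0 \<le> G" "G \<le> s" using assms(3,4) 2 fe by (auto simp: P_def G_def)
    have "(1 - P) * (1 - 2*G) \<ge> T * (1 - P*G) - 3 * eta"
      using assms fe PG by (intro psi_bound[OF _ _ _ _ _ _ _ _ _ _ _ T_def]) (auto simp: P_def G_def)
    moreover have "G*P \<le> s*al" using PG by (intro mult_mono) auto
    then have "T * (1 - P*G) \<ge> T * (1 - s*al)" using T0 by (intro mult_left_mono) (auto simp: mult.commute)
    moreover have "(1 - s + 2*f) * (1 - al + 2*e) = (1 - P) * (1 - 2*G)" by (simp add: P_def G_def algebra_simps)
    ultimately show ?thesis unfolding T_def by linarith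
  qed
qed

lemma div_le_aux: "(D::real) > 0 \<Longrightarrow> N \<le> B * D \<Longrightarrow> N / D \<le> B"
  by (simp add: pos_divide_le_eq)

lemma step_even_R:
  fixes R a :: int and b d x' r' eta D rho :: real
  assumes R4: "R \<ge> 4" and aR: "a \<ge> R" and aodd: "odd a \<Longrightarrow> a \<ge> R + 1"
    and bq: "b * (R - b) = 1" and b0: "0 < b" and b3: "b < 1/3"
    and dq: "d * (R + 1 - b) = 1" and d0: "0 < d" and d25: "d \<le> 2/5"
    and x0: "0 \<le> x'" and x25: "x' \<le> 2/5" and r0: "0 \<le> r'" and rx: "r' \<le> x'/2"
    and Ia: "x' \<le> b + eta" and Ib: "x' - 2*r' \<le> b + eta" and Ic: "x'/2 + r' \<le> d + eta"
    and e0: "0 \<le> eta" and e1: "eta \<le> 1"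
    and Dd: "D = a - x'" and rh: "rho = (if even a then r' else 1/2 - r')"
  shows "1/D \<le> b + eta/2" "1/D - 2*(rho/D) \<le> b + eta/2" "1/(2*D) + rho/D \<le> d + eta/2"
proof -
  have Dge: "D \<ge> R - x'" using aR Dd by simp
  have Dpos: "D > 0" using Dge R4 x25 by linarith
  have G1: "1/D \<le> b + eta/2"
  proof (rule div_le_aux[OF Dpos])
    have "(b + eta/2) * D \<ge> (b + eta/2) * (R - b - eta)"
      using Dge Ia b0 e0 by (intro mult_left_mono) auto
    moreover have "(b + eta/2) * (R - b - eta) = 1 + eta * (R/2 - 3*b/2 - eta/2)"
      using bq by (simp add: algebra_simps)
    moreover have "eta * (R/2 - 3*b/2 - eta/2) \<ge> 0" using e0 e1 b3 R4 by (intro mult_nonneg_nonneg) auto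
    ultimately show "1 \<le> (b + eta/2) * D" by linarith
  qed
  show "1/D \<le> b + eta/2" by (rule G1)
  have bR: "b * R > 1"
  proof -
    have "b * R = 1 + b * b" using bq by (simp add: algebra_simps)
    moreover have "b * b > 0" using b0 by simp
    ultimately show ?thesis by linarith
  qed
  show "1/D - 2*(rho/D) \<le> b + eta/2"
  proof (cases "even a")
    case True
    then have "rho/D \<ge> 0" using rh r0 Dpos by simp
    then show ?thesis using G1 by linarith
  next
    case False
    then have rho: "rho = 1/2 - r'" using rh by simp
    have "1/D - 2*(rho/D) = (1 - 2*rho)/D" by (simp add: diff_divide_distrib)
    also have "(1 - 2*rho)/D = 2*r'/D" using rho by simp
    also have "\<dots> \<le> x'/D" using rx Dpos by (simp add: divide_right_mono)
    also have "x'/D \<le> 1/R"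
    proof (rule div_le_aux[OF Dpos])
      have "(R + 1) * x' \<le> (R + 1) * (2/5)" using x25 R4 by (intro mult_left_mono) auto
      then have "R * x' + x' \<le> R" using R4 by (simp add: algebra_simps)
      then show "x' \<le> 1/R * D" using Dge R4 by (simp add: field_simps)
    qed
    also have "1/R < b" using bR R4 by (simp add: field_simps)
    finally show ?thesis using e0 by linarith
  qed
  show "1/(2*D) + rho/D \<le> d + eta/2"
  proof (cases "even a")
    case True
    then have rho: "rho = r'" using rh by simp
    have "1/(2*D) + rho/D \<le> (1 + x')/(2*D)" using rho rx Dpos by (simp add: field_simps)
    also have "\<dots> \<le> 1/(R+1)"
    proof -
      have "x' * (R + 3) \<le> 2/5 * (R + 3)" using x25 R4 by (intro mult_right_mono) auto
      then have "(1 + x') * (R + 1) \<le> 2 * D" using Dge R4 by (simp add: algebra_simps)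
      then show ?thesis using Dpos R4 by (simp add: field_simps)
    qed
    also have "1/(R+1) \<le> d"
    proof -
      have "d * (R+1) = 1 + d * b" using dq by (simp add: algebra_simps)
      moreover have "d * b > 0" using d0 b0 by simp
      ultimately have "d * (R+1) \<ge> 1" by linarith
      then show ?thesis using R4 by (simp add: field_simps)
    qed
    finally show ?thesis using e0 by linarith
  next
    case False
    then have rho: "rho = 1/2 - r'" and aR1: "a \<ge> R + 1" using rh aodd by auto
    have Dge1: "D \<ge> R + 1 - x'" using aR1 Dd by simp
    have "1/(2*D) + rho/D = (1/2 + rho)/D" by (simp add: add_divide_distrib)
    also have "(1/2 + rho)/D = (1 - r')/D" using rho by simp
    also have "\<dots> \<le> 1/D" using r0 Dpos by (simp add: divide_right_mono)
    also have "1/D \<le> d + eta/2"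
    proof (rule div_le_aux[OF Dpos])
      have "(d + eta/2) * D \<ge> (d + eta/2) * (R + 1 - b - eta)"
        using Dge1 Ia d0 e0 by (intro mult_left_mono) auto
      moreover have "(d + eta/2) * (R + 1 - b - eta) = d * (R + 1 - b) + eta * ((R + 1 - b - eta)/2 - d)"
        by (simp add: field_simps)
      moreover have "eta * ((R + 1 - b - eta)/2 - d) \<ge> 0" using e0 e1 b3 R4 d25 by (intro mult_nonneg_nonneg) auto
      ultimately show "1 \<le> (d + eta/2) * D" using dq by linarith
    qed
    finally show ?thesis .
  qed
qed


lemma step_odd_R:
  fixes R a :: int and b d x' r' eta D rho :: real
  assumes R3: "R \<ge> 3" and aR: "a \<ge> R" and aev: "even a \<Longrightarrow> a \<ge> R + 1"
    and bq: "b * (R + 1 - b) = 1" and b0: "0 < b" and b3: "b < 1/3"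
    and dq: "d * (R - b) = 1" and d0: "0 < d" and d25: "d \<le> 2/5"
    and x0: "0 \<le> x'" and x25: "x' \<le> 2/5" and r0: "0 \<le> r'" and rx: "r' \<le> x'/2"
    and Ib: "x' - 2*r' \<le> b + eta" and Ic: "x'/2 + r' \<le> d + eta"
    and e0: "0 \<le> eta" and e1: "eta \<le> 1"
    and Dd: "D = a - x'" and rh: "rho = (if even a then r' else 1/2 - r')"
  shows "1/D - 2*(rho/D) \<le> b + eta/2" "1/(2*D) + rho/D \<le> d + eta/2"
proof -
  have Dge: "D \<ge> R - x'" using aR Dd by simp
  have Dpos: "D > 0" using Dge R3 x25 by linarith
  have bR: "b * (R + 1) > 1"
  proof -
    have "b * (R + 1) = 1 + b * b" using bq by (simp add: algebra_simps)
    moreover have "b * b > 0" using b0 by simp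
    ultimately show ?thesis by linarith
  qed
  have dR: "d * R > 1"
  proof -
    have "d * R = 1 + d * b" using dq by (simp add: algebra_simps)
    moreover have "d * b > 0" using d0 b0 by simp
    ultimately show ?thesis by linarith
  qed
  show "1/D - 2*(rho/D) \<le> b + eta/2"
  proof (cases "even a")
    case True
    then have rho: "rho = r'" and aR1: "a \<ge> R + 1" using rh aev by auto
    have Dge1: "D \<ge> R + 1 - x'" using aR1 Dd by simp
    have "1/D - 2*(rho/D) = (1 - 2*r')/D" using rho by (simp add: diff_divide_distrib)
    also have "\<dots> \<le> b + eta/2"
    proof (cases "x' \<le> b")
      case True
      have "(1 - 2*r')/D \<le> 1/D" using r0 Dpos by (simp add: divide_right_mono)
      also have "1/D \<le> b"
      proof (rule div_le_aux[OF Dpos])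
        have "b * D \<ge> b * (R + 1 - b)" using Dge1 True b0 by (intro mult_left_mono) auto
        then show "1 \<le> b * D" using bq by linarith
      qed
      finally show ?thesis using e0 by linarith
    next
      case False
      have "(1 - 2*r')/D \<le> (1 - x' + b + eta)/D" using Ib Dpos by (simp add: divide_right_mono)
      also have "\<dots> \<le> b + eta/2"
      proof (rule div_le_aux[OF Dpos])
        have "(b + eta/2) * D \<ge> (b + eta/2) * (R + 1 - x')"
          using Dge1 b0 e0 by (intro mult_left_mono) auto
        moreover have "(b + eta/2) * (R + 1 - x') - (1 - x' + b + eta) =
            (b * (R + 1 - b) - 1) + (1 - b) * (x' - b) + eta * ((R + 1 - x')/2 - 1)"
          by (simp add: field_simps)
        moreover have "(1 - b) * (x' - b) \<ge> 0" using False b3 by simp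
        moreover have "eta * ((R + 1 - x')/2 - 1) \<ge> 0" using e0 R3 x25 by (intro mult_nonneg_nonneg) auto
        ultimately show "1 - x' + b + eta \<le> (b + eta/2) * D" using bq by linarith
      qed
      finally show ?thesis .
    qed
    finally show ?thesis .
  next
    case False
    then have rho: "rho = 1/2 - r'" using rh by simp
    have "1/D - 2*(rho/D) = (1 - 2*rho)/D" by (simp add: diff_divide_distrib)
    also have "(1 - 2*rho)/D = 2*r'/D" using rho by simp
    also have "\<dots> \<le> x'/D" using rx Dpos by (simp add: divide_right_mono)
    also have "x'/D \<le> 1/(R+1)"
    proof (rule div_le_aux[OF Dpos])
      have "(R + 2) * x' \<le> (R + 2) * (2/5)" using x25 R3 by (intro mult_left_mono) auto
      then have "(R + 1) * x' + x' \<le> R" using R3 by (simp add: algebra_simps)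
      then show "x' \<le> 1/(R+1) * D" using Dge R3 by (simp add: field_simps)
    qed
    also have "1/(R+1) < b" using bR R3 by (simp add: field_simps)
    finally show ?thesis using e0 by linarith
  qed
  show "1/(2*D) + rho/D \<le> d + eta/2"
  proof (cases "even a")
    case True
    then have rho: "rho = r'" and aR1: "a \<ge> R + 1" using rh aev by auto
    have Dge1: "D \<ge> R + 1 - x'" using aR1 Dd by simp
    have "1/(2*D) + rho/D \<le> (1 + x')/(2*D)" using rho rx Dpos by (simp add: field_simps)
    also have "\<dots> \<le> 1/R"
    proof -
      have "x' * (R + 2) \<le> 1 * (R + 2::real)" using x25 R3 by (intro mult_right_mono) auto
      then have "(1 + x') * R \<le> 2 * D" using Dge1 R3 by (simp add: algebra_simps)
      then show ?thesis using Dpos R3 by (simp add: field_simps)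
    qed
    also have "1/R < d" using dR R3 by (simp add: field_simps)
    finally show ?thesis using e0 by linarith
  next
    case False
    then have rho: "rho = 1/2 - r'" using rh by simp
    have "1/(2*D) + rho/D = (1/2 + rho)/D" by (simp add: add_divide_distrib)
    also have "(1/2 + rho)/D = (1 - r')/D" using rho by simp
    also have "\<dots> \<le> d + eta/2"
    proof (cases "x' \<le> b")
      case True
      have "(1 - r')/D \<le> 1/D" using r0 Dpos by (simp add: divide_right_mono)
      also have "1/D \<le> d"
      proof (rule div_le_aux[OF Dpos])
        have "d * D \<ge> d * (R - b)" using Dge True d0 by (intro mult_left_mono) auto
        then show "1 \<le> d * D" using dq by linarith
      qed
      finally show ?thesis using e0 by linarith
    next
      case False
      have "x'/2 - b/2 \<le> r' + eta/2" using Ib by linarith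
      then have "1 - r' \<le> 1 - (x' - b)/2 + eta/2" by (simp add: diff_divide_distrib)
      then have "(1 - r')/D \<le> (1 - (x' - b)/2 + eta/2)/D" using Dpos by (simp add: divide_right_mono)
      also have "\<dots> \<le> d + eta/2"
      proof (rule div_le_aux[OF Dpos])
        have "(d + eta/2) * D \<ge> (d + eta/2) * (R - x')"
          using Dge d0 e0 by (intro mult_left_mono) auto
        moreover have "(d + eta/2) * (R - x') - (1 - (x' - b)/2 + eta/2) =
            (d * (R - b) - 1) + (x' - b) * (1/2 - d) + eta/2 * (R - x' - 1)"
          by (simp add: field_simps)
        moreover have "(x' - b) * (1/2 - d) \<ge> 0" using False d25 by simp
        moreover have "eta/2 * (R - x' - 1) \<ge> 0" using e0 R3 x25 by (intro mult_nonneg_nonneg) auto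
        ultimately show "1 - (x' - b)/2 + eta/2 \<le> (d + eta/2) * D" using dq by linarith
      qed
      finally show ?thesis .
    qed
    finally show ?thesis .
  qed
qed

lemma beta_gen:
  fixes M :: real
  assumes "M \<ge> 4"
  shows "0 < (M - sqrt (M^2 - 4)) / 2 \<and> (M - sqrt (M^2 - 4)) / 2 < 1/3
    \<and> (M - sqrt (M^2 - 4)) / 2 * (M - (M - sqrt (M^2 - 4)) / 2) = 1"
proof -
  have M2: "M^2 - 4 \<ge> 0"
  proof -
    have "M*M \<ge> 4*4" using assms by (intro mult_mono) auto
    then show ?thesis by (simp add: power2_eq_square)
  qed
  define s where "s = sqrt (M^2 - 4)"
  have s0: "s \<ge> 0" using M2 by (simp add: s_def)
  have ss: "s * s = M^2 - 4" using M2 by (simp add: s_def)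
  have sM: "s < M"
  proof -
    have "M^2 - 4 < M^2" by simp
    then have "sqrt (M^2 - 4) < sqrt (M^2)" by (intro real_sqrt_less_mono)
    then show ?thesis using assms by (simp add: s_def)
  qed
  have sl: "M - 2/3 < s"
  proof -
    have "(M - 2/3)^2 < M^2 - 4" using assms by (simp add: power2_eq_square algebra_simps)
    then show ?thesis unfolding s_def by (rule real_less_rsqrt)
  qed
  have "(M - s) / 2 * (M - (M - s) / 2) = (M * M - s * s) / 4" by (simp add: field_simps)
  also have "\<dots> = 1" using ss by (simp add: power2_eq_square)
  finally show ?thesis using sM sl unfolding s_def by simp
qed

lemma consts_even:
  fixes R :: int
  assumes "R \<ge> 3" "even R"
  shows "R \<ge> 4" "0 < beta_R R" "beta_R R < 1/3" "beta_R R * (R - beta_R R) = 1"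
    "delta_R R * (R + 1 - beta_R R) = 1" "0 < delta_R R" "delta_R R \<le> 2/5"
proof -
  show R4: "R \<ge> 4" using assms by presburger
  have R4': "real_of_int R \<ge> 4" using R4 by simp
  have e: "beta_R R = (real_of_int R - sqrt ((real_of_int R)^2 - 4)) / 2"
    using assms by (simp add: beta_R_def)
  note g = beta_gen[OF R4', folded e]
  show "0 < beta_R R" "beta_R R < 1/3" "beta_R R * (R - beta_R R) = 1" using g by auto
  have dd: "delta_R R = 1 / (R + 1 - beta_R R)" using assms by (simp add: delta_R_def)
  have pos: "R + 1 - beta_R R \<ge> 14/3" using R4' g by linarith
  show dq: "delta_R R * (R + 1 - beta_R R) = 1" using dd pos by simp
  show "0 < delta_R R" using dd pos by simp
  have "delta_R R * (14/3) \<le> delta_R R * (R + 1 - beta_R R)" using pos dd by (intro mult_left_mono) auto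
  then show "delta_R R \<le> 2/5" using dq by linarith
qed

lemma consts_odd:
  fixes R :: int
  assumes "R \<ge> 3" "odd R"
  shows "0 < beta_R R" "beta_R R < 1/3" "beta_R R * (R + 1 - beta_R R) = 1"
    "delta_R R * (R - beta_R R) = 1" "0 < delta_R R" "delta_R R \<le> 2/5"
proof -
  have R4': "real_of_int R + 1 \<ge> 4" using assms by simp
  have e: "beta_R R = (real_of_int R + 1 - sqrt ((real_of_int R + 1)^2 - 4)) / 2"
    using assms by (simp add: beta_R_def)
  note g = beta_gen[OF R4', folded e]
  show "0 < beta_R R" "beta_R R < 1/3" "beta_R R * (R + 1 - beta_R R) = 1" using g by auto
  have dd: "delta_R R = 1 / (R - beta_R R)" using assms by (simp add: delta_R_def)
  have pos: "R - beta_R R \<ge> 8/3" using assms g by linarith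
  show dq: "delta_R R * (R - beta_R R) = 1" using dd pos by simp
  show "0 < delta_R R" using dd pos by simp
  have "delta_R R * (8/3) \<le> delta_R R * (R - beta_R R)" using pos dd by (intro mult_left_mono) auto
  then show "delta_R R \<le> 2/5" using dq by linarith
qed

lemma consts_common:
  fixes R :: int
  assumes "R \<ge> 3"
  shows "0 < beta_R R" "beta_R R \<le> 2/5" "0 < delta_R R" "delta_R R \<le> 2/5"
  using consts_even[OF assms] consts_odd[OF assms] by (cases "even R"; auto)+

definition Inv :: "int \<Rightarrow> real \<Rightarrow> real \<Rightarrow> real \<Rightarrow> bool" where
  "Inv R eta x r \<longleftrightarrow> 0 < x \<and> x \<le> 2/5 \<and> 0 \<le> r \<and> r \<le> x/2 \<and> x - 2*r \<le> beta_R R + eta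
     \<and> x/2 + r \<le> delta_R R + eta \<and> (even R \<longrightarrow> x \<le> beta_R R + eta)"

lemma Inv_mono: "Inv R eta x r \<Longrightarrow> eta \<le> eta' \<Longrightarrow> Inv R eta' x r"
  unfolding Inv_def by auto

lemma Inv_one:
  assumes "R \<ge> 3" "0 < x" "x \<le> 2/5" "0 \<le> r" "r \<le> x/2"
  shows "Inv R 1 x r"
  using assms consts_common[OF assms(1)] unfolding Inv_def by auto

lemma crude_step:
  fixes a :: int and x' r' :: real
  assumes "a \<ge> 3" "0 \<le> x'" "x' \<le> 1/2" "0 \<le> r'" "r' \<le> 1/2"
  shows "0 < 1/(a - x')" "1/(a - x') \<le> 2/5"
    "0 \<le> 1/(a - x') * (if even a then r' else 1/2 - r')"
    "1/(a - x') * (if even a then r' else 1/2 - r') \<le> 1/(a - x') / 2"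
proof -
  have D: "a - x' \<ge> 5/2" using assms by simp
  show "0 < 1/(a - x')" using D by simp
  show "1/(a - x') \<le> 2/5" using D by (simp add: field_simps)
  have r: "0 \<le> (if even a then r' else 1/2 - r')" "(if even a then r' else 1/2 - r') \<le> 1/2"
    using assms by auto
  show "0 \<le> 1/(a - x') * (if even a then r' else 1/2 - r')" using D r by simp
  show "1/(a - x') * (if even a then r' else 1/2 - r') \<le> 1/(a - x') / 2"
    using D r mult_left_mono[OF r(2), of "1/(a-x')"] by simp
qed

lemma Inv_step:
  fixes R a :: int and x' r' eta :: real
  assumes R3: "R \<ge> 3" and aR: "a \<ge> R" and I: "Inv R eta x' r'" and e0: "0 \<le> eta" and e1: "eta \<le> 1"
  shows "Inv R (eta/2) (1/(a - x')) (1/(a - x') * (if even a then r' else 1/2 - r'))"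
proof -
  define D where "D = a - x'"
  define rho where "rho = (if even a then r' else 1/2 - r')"
  have Ix: "0 < x'" "x' \<le> 2/5" "0 \<le> r'" "r' \<le> x'/2" "x' - 2*r' \<le> beta_R R + eta"
     "x'/2 + r' \<le> delta_R R + eta" "even R \<Longrightarrow> x' \<le> beta_R R + eta" using I unfolding Inv_def by auto
  have cs: "0 < 1/(a - x')" "1/(a - x') \<le> 2/5"
    "0 \<le> 1/(a - x') * (if even a then r' else 1/2 - r')"
    "1/(a - x') * (if even a then r' else 1/2 - r') \<le> 1/(a - x') / 2"
  proof -
    have h: "a \<ge> 3" "0 \<le> x'" "x' \<le> 1/2" "0 \<le> r'" "r' \<le> 1/2" using Ix R3 aR by linarith+
    show "0 < 1/(a - x')" "1/(a - x') \<le> 2/5"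
    "0 \<le> 1/(a - x') * (if even a then r' else 1/2 - r')"
    "1/(a - x') * (if even a then r' else 1/2 - r') \<le> 1/(a - x') / 2"
      using crude_step[OF h] by auto
  qed
  have main: "1/D - 2*(rho/D) \<le> beta_R R + eta/2 \<and> 1/(2*D) + rho/D \<le> delta_R R + eta/2
     \<and> (even R \<longrightarrow> 1/D \<le> beta_R R + eta/2)"
  proof (cases "even R")
    case True
    note c = consts_even[OF R3 True]
    have ao: "odd a \<Longrightarrow> a \<ge> R + 1" using aR True by (metis add.commute le_less zero_le_one int_one_le_iff_zero_less odd_pos zless_imp_add1_zle)
    note st = step_even_R[OF c(1) aR ao c(4) c(2) c(3) c(5) c(6) c(7) less_imp_le[OF Ix(1)] Ix(2) Ix(3) Ix(4)
          Ix(7)[OF True] Ix(5) Ix(6) e0 e1 D_def rho_def]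
    then show ?thesis by simp
  next
    case False
    note c = consts_odd[OF R3 False]
    have ae: "even a \<Longrightarrow> a \<ge> R + 1" using aR False by (metis le_less zless_imp_add1_zle)
    note st = step_odd_R[OF R3 aR ae c(3) c(1) c(2) c(4) c(5) c(6) less_imp_le[OF Ix(1)] Ix(2) Ix(3) Ix(4)
          Ix(5) Ix(6) e0 e1 D_def rho_def]
    then show ?thesis using False by simp
  qed
  have eq1: "1/(a - x') - 2 * (1/(a - x') * (if even a then r' else 1/2 - r')) = 1/D - 2*(rho/D)"
    by (simp add: D_def rho_def)
  have eq2: "1/(a - x') / 2 + 1/(a - x') * (if even a then r' else 1/2 - r') = 1/(2*D) + rho/D"
    by (simp add: D_def rho_def)
  have f1: "1/(a - x') - 2 * (1/(a - x') * (if even a then r' else 1/2 - r')) \<le> beta_R R + eta/2"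
    using eq1 main by linarith
  have f2: "1/(a - x') / 2 + 1/(a - x') * (if even a then r' else 1/2 - r') \<le> delta_R R + eta/2"
    using eq2 main by linarith
  have f3: "even R \<longrightarrow> 1/(a - x') \<le> beta_R R + eta/2" using main unfolding D_def by blast
  show ?thesis unfolding Inv_def using cs f1 f2 f3 by blast
qed

locale ncf_R =
  fixes \<alpha> :: real and K :: nat and R :: int
  assumes a0: "0 < \<alpha>" and a1: "\<alpha> < 1" and aq: "\<alpha> \<notin> \<rat>"
    and K1: "K \<ge> 1" and R3: "R \<ge> 3" and aKR: "\<And>i. i \<ge> K \<Longrightarrow> ncf_a \<alpha> i \<ge> R"
begin

lemma aK3: "i \<ge> K \<Longrightarrow> AA \<alpha> i \<ge> 3"
  using aKR[of i] R3 by (simp add: AA_def)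

sublocale ncf_ev \<alpha> K
  using a0 a1 aq K1 aK3 by unfold_locales auto

definition xs where "xs j = QQ \<alpha> j / QQ \<alpha> (Suc j)"
definition rs where "rs j = \<bar>PHI \<alpha> j\<bar> / QQ \<alpha> (Suc j)"
definition xf where "xf j = ncf_rem \<alpha> j"
definition rf where "rf j = \<bar>EE \<alpha> j\<bar> / DD \<alpha> j"

lemma QQ_Suc_pos: "QQ \<alpha> (Suc j) \<ge> 1"
  using QQ_pos[OF a0 a1 aq, of "Suc j"] by simp

lemma QQ_le: "QQ \<alpha> j \<le> QQ \<alpha> (Suc j)"
  using QQ_Suc_ge[OF a0 a1 aq, of j] by simp

lemma QQ_nn: "QQ \<alpha> j \<ge> 0" using QQ_nonneg[OF a0 a1 aq] .

lemma PHI_gen: "\<bar>PHI \<alpha> j\<bar> \<le> QQ \<alpha> (Suc j) / 2 \<and> (even (cnt \<alpha> j) \<longrightarrow> PHI \<alpha> j \<le> 0)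
    \<and> (odd (cnt \<alpha> j) \<longrightarrow> PHI \<alpha> j \<ge> 0)"
proof (cases "j = 0")
  case True then show ?thesis by simp
next
  case False
  then have "\<bar>PHI \<alpha> j\<bar> \<le> QQ \<alpha> j / 2 \<and> (even (cnt \<alpha> j) \<longrightarrow> PHI \<alpha> j \<le> 0)
    \<and> (odd (cnt \<alpha> j) \<longrightarrow> PHI \<alpha> j \<ge> 0)" using PHI_bound[OF a0 a1 aq, of j] by simp
  then show ?thesis using QQ_le[of j] by linarith
qed

lemma PHI_le: "\<bar>PHI \<alpha> j\<bar> \<le> QQ \<alpha> j / 2" if "j \<ge> 1"
  using PHI_bound[OF a0 a1 aq that] by blast

lemma xs_rec: "xs (Suc j) = 1 / (AA \<alpha> (Suc j) - xs j)"
proof -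
  have q: "QQ \<alpha> (Suc j) > 0" using QQ_Suc_pos[of j] by simp
  have "AA \<alpha> (Suc j) - xs j = QQ \<alpha> (Suc (Suc j)) / QQ \<alpha> (Suc j)"
    using q by (simp add: xs_def QQ_rec field_simps)
  then show ?thesis by (simp add: xs_def)
qed

lemma rs_rec: "rs (Suc j) = xs (Suc j) * (if even (ncf_a \<alpha> (Suc j)) then rs j else 1/2 - rs j)"
proof -
  have q: "QQ \<alpha> (Suc j) > 0" "QQ \<alpha> (Suc (Suc j)) > 0" using QQ_Suc_pos by (simp_all add: less_le_trans[OF zero_less_one])
  have abs_eq: "\<bar>PHI \<alpha> (Suc j)\<bar> = (if even (ncf_a \<alpha> (Suc j)) then \<bar>PHI \<alpha> j\<bar> else QQ \<alpha> (Suc j)/2 - \<bar>PHI \<alpha> j\<bar>)"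
  proof (cases "even (ncf_a \<alpha> (Suc j))")
    case True
    then have "TT \<alpha> (Suc j) = 0" by (rule TT_even)
    then show ?thesis using True by (simp add: PHI_Suc)
  next
    case False
    then have t: "TT \<alpha> (Suc j) = (-1) ^ cnt \<alpha> j" using TT_odd by simp
    have b: "\<bar>PHI \<alpha> j\<bar> \<le> QQ \<alpha> (Suc j) / 2" "even (cnt \<alpha> j) \<longrightarrow> PHI \<alpha> j \<le> 0" "odd (cnt \<alpha> j) \<longrightarrow> PHI \<alpha> j \<ge> 0"
      using PHI_gen[of j] by auto
    have "\<bar>PHI \<alpha> (Suc j)\<bar> = QQ \<alpha> (Suc j)/2 - \<bar>PHI \<alpha> j\<bar>"
    proof (cases "even (cnt \<alpha> j)")
      case True
      then have p: "PHI \<alpha> (Suc j) = PHI \<alpha> j + QQ \<alpha> (Suc j)/2" using t by (simp add: PHI_Suc)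
      have a: "\<bar>PHI \<alpha> j\<bar> = - PHI \<alpha> j" using b True by simp
      then have "PHI \<alpha> (Suc j) \<ge> 0" using p b by linarith
      then show ?thesis using p a by simp
    next
      case c: False
      then have p: "PHI \<alpha> (Suc j) = PHI \<alpha> j - QQ \<alpha> (Suc j)/2" using t by (simp add: PHI_Suc)
      have a: "\<bar>PHI \<alpha> j\<bar> = PHI \<alpha> j" using b c by simp
      then have "PHI \<alpha> (Suc j) \<le> 0" using p b by linarith
      then show ?thesis using p a by simp
    qed
    then show ?thesis using False by simp
  qed
  show ?thesis
  proof (cases "even (ncf_a \<alpha> (Suc j))")
    case True
    then show ?thesis using q abs_eq by (simp add: rs_def xs_def)
  next
    case False
    then have "rs (Suc j) = (QQ \<alpha> (Suc j)/2 - \<bar>PHI \<alpha> j\<bar>) / QQ \<alpha> (Suc (Suc j))"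
      using abs_eq by (simp add: rs_def)
    also have "\<dots> = xs (Suc j) * (1/2 - rs j)" using q by (simp add: xs_def rs_def field_simps)
    finally show ?thesis using False by simp
  qed
qed

lemma xs_bounds: "0 \<le> xs j" "xs j < 1"
proof -
  show "0 \<le> xs j" using QQ_nn[of j] QQ_Suc_pos[of j] by (simp add: xs_def)
  have "QQ \<alpha> j < QQ \<alpha> (Suc j)" using QQ_Suc_ge[OF a0 a1 aq, of j] by simp
  then show "xs j < 1" using QQ_Suc_pos[of j] by (simp add: xs_def)
qed

lemma rs_bounds: "0 \<le> rs j" "rs j \<le> 1/2"
proof -
  show "0 \<le> rs j" using QQ_Suc_pos[of j] by (simp add: rs_def)
  have "\<bar>PHI \<alpha> j\<bar> \<le> QQ \<alpha> (Suc j) / 2" using PHI_gen by blast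
  then show "rs j \<le> 1/2" using QQ_Suc_pos[of j] by (simp add: rs_def field_simps)
qed

lemma xs_half: "j \<ge> K \<Longrightarrow> xs j \<le> 1/2"
proof -
  assume j: "j \<ge> K"
  then obtain i where i: "j = Suc i" using K1 by (cases j) auto
  have "AA \<alpha> (Suc i) \<ge> 3" using aK3 j i by simp
  then have "AA \<alpha> (Suc i) - xs i \<ge> 2" using xs_bounds(2)[of i] by linarith
  then have "1 / (AA \<alpha> (Suc i) - xs i) \<le> 1/2" by (intro div_le_aux) auto
  then show ?thesis using i xs_rec[of i] by simp
qed

lemma past_base: "j \<ge> K + 1 \<Longrightarrow> Inv R 1 (xs j) (rs j)"
proof -
  assume j: "j \<ge> K + 1"
  then obtain i where i: "j = Suc i" and iK: "i \<ge> K" by (cases j) auto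
  have a3: "ncf_a \<alpha> (Suc i) \<ge> 3" using aK3[of "Suc i"] iK by (simp add: AA_def)
  note cs = crude_step[OF a3 xs_bounds(1)[of i] xs_half[OF iK] rs_bounds(1)[of i] rs_bounds(2)[of i]]
  have e1: "xs (Suc i) = 1 / (real_of_int (ncf_a \<alpha> (Suc i)) - xs i)" using xs_rec by (simp add: AA_def)
  have e2: "rs (Suc i) = 1 / (real_of_int (ncf_a \<alpha> (Suc i)) - xs i) *
      (if even (ncf_a \<alpha> (Suc i)) then rs i else 1/2 - rs i)" using rs_rec e1 by simp
  have h1: "0 < xs (Suc i)" unfolding e1 by (rule cs(1))
  have h2: "xs (Suc i) \<le> 2/5" unfolding e1 by (rule cs(2))
  have h3: "0 \<le> rs (Suc i)" unfolding e2 by (rule cs(3))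
  have h4: "rs (Suc i) \<le> xs (Suc i) / 2" unfolding e2 e1 by (rule cs(4))
  show ?thesis using Inv_one[OF R3 h1 h2 h3 h4] i by simp
qed

lemma past_inv: "j \<ge> K + 1 + m \<Longrightarrow> Inv R (1/2^m) (xs j) (rs j)"
proof (induction m arbitrary: j)
  case 0 then show ?case using past_base by simp
next
  case (Suc m)
  then obtain i where i: "j = Suc i" and iK: "i \<ge> K + 1 + m" by (cases j) auto
  have I: "Inv R (1/2^m) (xs i) (rs i)" using Suc.IH iK by simp
  have aR: "ncf_a \<alpha> (Suc i) \<ge> R" using aKR[of "Suc i"] iK by simp
  have e1: "xs (Suc i) = 1 / (real_of_int (ncf_a \<alpha> (Suc i)) - xs i)" using xs_rec by (simp add: AA_def)
  have e2: "rs (Suc i) = 1 / (real_of_int (ncf_a \<alpha> (Suc i)) - xs i) *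
      (if even (ncf_a \<alpha> (Suc i)) then rs i else 1/2 - rs i)" using rs_rec e1 by simp
  have "Inv R (1/2^m/2) (xs (Suc i)) (rs (Suc i))"
    unfolding e1 e2 by (rule Inv_step[OF R3 aR I]) (auto simp: field_simps)
  then show ?case using i by (simp add: mult.commute)
qed

lemma xf_rec: "xf j = 1 / (AA \<alpha> (Suc j) - xf (Suc j))"
  unfolding xf_def by (rule rem_eq')

lemma rf_rec: "rf j = xf j * (if even (ncf_a \<alpha> (Suc j)) then rf (Suc j) else 1/2 - rf (Suc j))"
proof -
  have d: "DD \<alpha> j > 0" "DD \<alpha> (Suc j) > 0" using DD_pos' by auto
  have dd: "DD \<alpha> (Suc j) = xf j * DD \<alpha> j" using DD_Suc' by (simp add: xf_def)
  have xp: "xf j > 0" using rem_pos' by (simp add: xf_def)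
  have abs_eq: "\<bar>EE \<alpha> j\<bar> = (if even (ncf_a \<alpha> (Suc j)) then \<bar>EE \<alpha> (Suc j)\<bar> else DD \<alpha> (Suc j)/2 - \<bar>EE \<alpha> (Suc j)\<bar>)"
  proof (cases "even (ncf_a \<alpha> (Suc j))")
    case True
    then have "TT \<alpha> (Suc j) = 0" by (rule TT_even)
    then show ?thesis using True EE_rec[of j] by simp
  next
    case False
    then have t: "TT \<alpha> (Suc j) = (-1) ^ cnt \<alpha> j" using TT_odd by simp
    have c: "cnt \<alpha> (Suc j) = cnt \<alpha> j + 1" using False by (simp add: cnt_Suc)
    have b: "\<bar>EE \<alpha> (Suc j)\<bar> \<le> DD \<alpha> (Suc (Suc j)) / 2" "even (cnt \<alpha> (Suc j)) \<longrightarrow> EE \<alpha> (Suc j) \<ge> 0"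
      "odd (cnt \<alpha> (Suc j)) \<longrightarrow> EE \<alpha> (Suc j) \<le> 0"
      using EE_bound[of "Suc j"] by auto
    have dl: "DD \<alpha> (Suc (Suc j)) \<le> DD \<alpha> (Suc j)" using DD_dec[OF a0 a1 aq, of "Suc j"] by simp
    have "\<bar>EE \<alpha> j\<bar> = DD \<alpha> (Suc j)/2 - \<bar>EE \<alpha> (Suc j)\<bar>"
    proof (cases "even (cnt \<alpha> j)")
      case True
      then have p: "EE \<alpha> j = DD \<alpha> (Suc j)/2 + EE \<alpha> (Suc j)" using t EE_rec[of j] by simp
      have a: "\<bar>EE \<alpha> (Suc j)\<bar> = - EE \<alpha> (Suc j)" using b True c by simp
      then have "EE \<alpha> j \<ge> 0" using p b dl by linarith
      then show ?thesis using p a by simp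
    next
      case cc: False
      then have p: "EE \<alpha> j = - DD \<alpha> (Suc j)/2 + EE \<alpha> (Suc j)" using t EE_rec[of j] by simp
      have a: "\<bar>EE \<alpha> (Suc j)\<bar> = EE \<alpha> (Suc j)" using b cc c by simp
      then have "EE \<alpha> j \<le> 0" using p b dl by linarith
      then show ?thesis using p a by simp
    qed
    then show ?thesis using False by simp
  qed
  show ?thesis
  proof (cases "even (ncf_a \<alpha> (Suc j))")
    case True
    then have "rf j = \<bar>EE \<alpha> (Suc j)\<bar> / DD \<alpha> j" using abs_eq by (simp add: rf_def)
    also have "\<dots> = xf j * rf (Suc j)" using d dd xp by (simp add: rf_def field_simps)
    finally show ?thesis using True by simp
  next
    case False
    then have "rf j = (DD \<alpha> (Suc j)/2 - \<bar>EE \<alpha> (Suc j)\<bar>) / DD \<alpha> j" using abs_eq by (simp add: rf_def)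
    also have "\<dots> = xf j * (1/2 - rf (Suc j))" using d dd xp by (simp add: rf_def field_simps)
    finally show ?thesis using False by simp
  qed
qed

lemma rf_bounds: "0 \<le> rf j" "rf j \<le> xf j / 2"
proof -
  show "0 \<le> rf j" using DD_pos'[of j] by (simp add: rf_def)
  have "\<bar>EE \<alpha> j\<bar> \<le> DD \<alpha> (Suc j) / 2" using EE_bound by blast
  then show "rf j \<le> xf j / 2" using DD_pos'[of j] DD_Suc'[of j] by (simp add: rf_def xf_def field_simps)
qed

lemma fut_inv: "j \<ge> K \<Longrightarrow> Inv R (1/2^m) (xf j) (rf j)"
proof (induction m arbitrary: j)
  case 0
  have "0 < xf j" "xf j \<le> 2/5" using rem_pos' rem_le_25 0 by (auto simp: xf_def)
  then show ?case using Inv_one[OF R3] rf_bounds[of j] by simp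
next
  case (Suc m)
  have I: "Inv R (1/2^m) (xf (Suc j)) (rf (Suc j))" using Suc by simp
  have aR: "ncf_a \<alpha> (Suc j) \<ge> R" using aKR[of "Suc j"] Suc.prems by simp
  have e1: "xf j = 1 / (real_of_int (ncf_a \<alpha> (Suc j)) - xf (Suc j))" using xf_rec[of j] by (simp add: AA_def)
  have e2: "rf j = 1 / (real_of_int (ncf_a \<alpha> (Suc j)) - xf (Suc j)) *
      (if even (ncf_a \<alpha> (Suc j)) then rf (Suc j) else 1/2 - rf (Suc j))" using rf_rec[of j] e1 by simp
  have "Inv R (1/2^m/2) (xf j) (rf j)"
    unfolding e1 e2 by (rule Inv_step[OF R3 aR I]) (auto simp: field_simps)
  then show ?case by (simp add: mult.commute)
qed

lemma sign_opp: "PHI \<alpha> j * EE \<alpha> j \<le> 0"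
proof (cases "even (cnt \<alpha> j)")
  case True
  then have "PHI \<alpha> j \<le> 0" "EE \<alpha> j \<ge> 0" using PHI_gen[of j] EE_bound[of j] by auto
  then show ?thesis by (simp add: mult_nonpos_nonneg)
next
  case False
  then have "PHI \<alpha> j \<ge> 0" "EE \<alpha> j \<le> 0" using PHI_gen[of j] EE_bound[of j] by auto
  then show ?thesis by (simp add: mult_nonneg_nonpos)
qed

end

lemma C_R_T: "C_R R = (1 - beta_R R) * (1 - 2 * delta_R R) / (1 - beta_R R * delta_R R) / 4"
  by (simp add: C_R_def mult.commute)

context ncf_R
begin

lemma H_index:
  assumes m5: "mm \<ge> 5" and jK: "j \<ge> K + 1 + mm" and sg: "sg = 1 \<or> sg = -1"
  shows "Pp (QQ \<alpha> j) (QQ \<alpha> (Suc j)) (DD \<alpha> j) (DD \<alpha> (Suc j)) (sg * PHI \<alpha> j) (sg * EE \<alpha> j) (1/2) (1/2)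
     \<ge> C_R R - 2 / 2^mm"
proof -
  define eta :: real where "eta = 1/2^mm"
  have e0: "0 \<le> eta" by (simp add: eta_def)
  have "(2::real)^5 \<le> 2^mm" using m5 by (intro power_increasing) auto
  then have e1: "eta \<le> 1/25" by (simp add: eta_def field_simps)
  define Q0 Q1 D0 D1 where "Q0 = QQ \<alpha> j" "Q1 = QQ \<alpha> (Suc j)" "D0 = DD \<alpha> j" "D1 = DD \<alpha> (Suc j)"
  have Q1p: "Q1 > 0" using QQ_Suc_pos[of j] by (simp add: Q0_Q1_D0_D1_def)
  have D0p: "D0 > 0" using DD_pos' by (simp add: Q0_Q1_D0_D1_def)
  define s al f e where "s = xs j" "al = xf j" "f = sg * PHI \<alpha> j / Q1" "e = sg * EE \<alpha> j / D0"
  have sg2: "\<bar>sg\<bar> = 1" "sg * sg = 1" using sg by auto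
  have af: "\<bar>f\<bar> = rs j" using Q1p sg2 by (simp add: s_al_f_e_def rs_def Q0_Q1_D0_D1_def abs_mult)
  have ae: "\<bar>e\<bar> = rf j" using D0p sg2 by (simp add: s_al_f_e_def rf_def Q0_Q1_D0_D1_def abs_mult)
  have IP: "Inv R eta s (rs j)" using past_inv[of mm j] jK by (simp add: eta_def s_al_f_e_def)
  have IF: "Inv R eta al (rf j)" using fut_inv[of j mm] jK by (simp add: eta_def s_al_f_e_def)
  have fe: "f * e \<le> 0"
  proof -
    have "f * e = (sg * sg) * (PHI \<alpha> j * EE \<alpha> j) / (Q1 * D0)" by (simp add: s_al_f_e_def)
    also have "\<dots> = (PHI \<alpha> j * EE \<alpha> j) / (Q1 * D0)" using sg2 by simp
    finally show ?thesis using sign_opp[of j] Q1p D0p by (simp add: divide_nonpos_pos)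
  qed
  note cc = consts_common[OF R3]
  have HB: "(1 - s + 2*f) * (1 - al + 2*e) \<ge> (1 - beta_R R) * (1 - 2*delta_R R) / (1 - beta_R R * delta_R R) * (1 - s*al) - 3 * eta"
    apply (rule H_bound)
    using IP IF af ae fe cc e0 e1 unfolding Inv_def by auto
  have s_eq: "Q0 = s * Q1" using Q1p by (simp add: s_al_f_e_def xs_def Q0_Q1_D0_D1_def)
  have al_eq: "D1 = al * D0" using DD_Suc'[of j] by (simp add: s_al_f_e_def xf_def Q0_Q1_D0_D1_def)
  have f_eq: "sg * PHI \<alpha> j = f * Q1" using Q1p by (simp add: s_al_f_e_def)
  have e_eq: "sg * EE \<alpha> j = e * D0" using D0p by (simp add: s_al_f_e_def)
  have dt: "Q1 * D0 - Q0 * D1 = 1" using det[of \<alpha> j] by (simp add: Q0_Q1_D0_D1_def)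
  have x: "Q0 * D1 = Q1 * D0 * (s * al)" unfolding s_eq al_eq by (simp add: ac_simps)
  have "Q1 * D0 * (1 - s * al) = Q1 * D0 - Q1 * D0 * (s * al)" by (simp add: right_diff_distrib)
  then have dt2: "Q1 * D0 * (1 - s * al) = 1" using dt x by linarith
  have sal: "s * al \<le> 4/25"
  proof -
    have "s * al \<le> (2/5) * (2/5)" using IP IF unfolding Inv_def by (intro mult_mono) auto
    then show ?thesis by simp
  qed
  have QD: "Q1 * D0 \<le> 2"
  proof -
    have "Q1 * D0 * (21/25) \<le> Q1 * D0 * (1 - s * al)" using sal Q1p D0p by (intro mult_left_mono) auto
    then show ?thesis using dt2 by linarith
  qed
  have Pp_eq: "Pp Q0 Q1 D0 D1 (sg * PHI \<alpha> j) (sg * EE \<alpha> j) (1/2) (1/2) =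
      Q1 * D0 / 4 * ((1 - s + 2*f) * (1 - al + 2*e))"
    unfolding Pp_def s_eq al_eq f_eq e_eq by (simp add: field_simps)
  define T where "T = (1 - beta_R R) * (1 - 2*delta_R R) / (1 - beta_R R * delta_R R)"
  have A: "Q1 * D0 / 4 * ((1 - s + 2*f) * (1 - al + 2*e)) \<ge> Q1 * D0 / 4 * (T * (1 - s*al) - 3 * eta)"
    using HB Q1p D0p unfolding T_def by (intro mult_left_mono) auto
  have A2: "Q1 * D0 / 4 * (T * (1 - s*al) - 3 * eta) = (Q1 * D0 * (1 - s*al)) * T / 4 - 3 * eta * (Q1 * D0) / 4"
    by (simp add: algebra_simps)
  have A3: "(Q1 * D0 * (1 - s*al)) * T / 4 - 3 * eta * (Q1 * D0) / 4 = T/4 - 3 * eta * (Q1 * D0) / 4" unfolding dt2 by simp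
  have A4: "3 * eta * (Q1 * D0) / 4 \<le> 3 * eta * 2 / 4" using QD e0 by (intro divide_right_mono mult_left_mono) auto
  have "Pp Q0 Q1 D0 D1 (sg * PHI \<alpha> j) (sg * EE \<alpha> j) (1/2) (1/2) \<ge> T/4 - 2 * eta"
    using Pp_eq e0 A A2 A3 A4 by linarith
  then show ?thesis using C_R_T[of R] by (simp add: T_def eta_def Q0_Q1_D0_D1_def)
qed

end

lemma nat_descent: "(\<forall>k. (f::nat\<Rightarrow>nat) (Suc k) < f k) \<Longrightarrow> False"
proof -
  assume h: "\<forall>k. f (Suc k) < f k"
  have "f k + k \<le> f 0" for k
  proof (induction k)
    case 0 then show ?case by simp
  next
    case (Suc k) then show ?case using h[rule_format, of k] by simp
  qed
  from this[of "Suc (f 0)"] show False by simp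
qed

lemma OSq_abs: "\<bar>WW \<alpha> n m j\<bar> \<ge> 1/2"
proof -
  have "odd (OSq \<alpha> n m j)" by (rule OO_odd)
  then have "OSq \<alpha> n m j \<noteq> 0" by auto
  then have "\<bar>OSq \<alpha> n m j\<bar> \<ge> 1" by linarith
  then have "\<bar>real_of_int (OSq \<alpha> n m j)\<bar> \<ge> 1" by linarith
  then show ?thesis by (simp add: WW_def)
qed

lemma WW_desc: "\<bar>WW \<alpha> n m j\<bar> > \<bar>WW \<alpha> n m i\<bar> \<Longrightarrow> nat \<bar>OSq \<alpha> n m j\<bar> > nat \<bar>OSq \<alpha> n m i\<bar>"
proof -
  assume "\<bar>WW \<alpha> n m j\<bar> > \<bar>WW \<alpha> n m i\<bar>"
  then have "\<bar>real_of_int (OSq \<alpha> n m j)\<bar> > \<bar>real_of_int (OSq \<alpha> n m i)\<bar>" by (simp add: WW_def)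
  then have "\<bar>OSq \<alpha> n m j\<bar> > \<bar>OSq \<alpha> n m i\<bar>" by linarith
  then show ?thesis by simp
qed

lemma sign_help1: "\<not> ((x::real) * y < 0) \<Longrightarrow> y > 0 \<Longrightarrow> x \<noteq> 0 \<Longrightarrow> x > 0"
  by (auto simp: mult_less_0_iff)
lemma sign_help2: "\<not> ((x::real) * y < 0) \<Longrightarrow> y < 0 \<Longrightarrow> x \<noteq> 0 \<Longrightarrow> x < 0"
  by (auto simp: mult_less_0_iff)

lemma Pp_neg: "Pp q0 q1 d0 d1 (-ph) (-e) (-x) (-y) = Pp q0 q1 d0 d1 ph e x y"
  unfolding Pp_def by (simp add: algebra_simps)

lemma C_R_le: "R \<ge> 3 \<Longrightarrow> C_R R \<le> 1/4"
proof -
  assume R3: "R \<ge> 3"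
  note c = consts_common[OF R3]
  define b d where "b = beta_R R" "d = delta_R R"
  have bd: "b * d \<le> (2/5) * (2/5)" using c by (intro mult_mono) (auto simp: b_d_def)
  have pos: "1 - b * d > 0" using bd by linarith
  have "(1 - b * d) - (1 - b) * (1 - 2*d) = b * (1 - d) + 2 * d * (1 - b)" by (simp add: algebra_simps)
  moreover have "b * (1 - d) \<ge> 0" "2 * d * (1 - b) \<ge> 0" using c by (auto simp: b_d_def)
  ultimately have "(1 - b) * (1 - 2*d) \<le> 1 - b * d" by linarith
  then have T1: "(1 - b) * (1 - 2*d) / (1 - b * d) \<le> 1" using pos by (simp add: divide_le_eq)
  define T where "T = (1 - b) * (1 - 2*d) / (1 - b * d)"
  have "C_R R = T / 4" using C_R_T[of R] unfolding T_def b_d_def by simp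
  moreover have "T \<le> 1" using T1 unfolding T_def .
  ultimately show ?thesis by linarith
qed

context ncf_R
begin

lemma QQ_double: "j \<ge> K \<Longrightarrow> QQ \<alpha> (Suc j) \<ge> 2 * QQ \<alpha> j"
proof -
  assume j: "j \<ge> K"
  then obtain i where i: "j = Suc i" using K1 by (cases j) auto
  have "QQ \<alpha> (Suc (Suc i)) = AA \<alpha> (Suc i) * QQ \<alpha> (Suc i) - QQ \<alpha> i" by (rule QQ_rec)
  moreover have "AA \<alpha> (Suc i) * QQ \<alpha> (Suc i) \<ge> 3 * QQ \<alpha> (Suc i)"
    using aK3[of "Suc i"] j i QQ_nn by (intro mult_right_mono) auto
  moreover have "QQ \<alpha> i \<le> QQ \<alpha> (Suc i)" by (rule QQ_le)
  ultimately show ?thesis unfolding i by linarith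
qed

lemma facts_at:
  assumes "j \<ge> K"
  shows "QQ \<alpha> j \<ge> 0" "QQ \<alpha> (Suc j) \<ge> 0" "DD \<alpha> j \<ge> 0" "DD \<alpha> (Suc j) \<ge> 0"
    "\<bar>PHI \<alpha> j\<bar> \<le> QQ \<alpha> j / 2" "\<bar>EE \<alpha> j\<bar> \<le> DD \<alpha> (Suc j) / 2"
    "QQ \<alpha> (Suc j) * DD \<alpha> j - QQ \<alpha> j * DD \<alpha> (Suc j) = 1"
    "QQ \<alpha> (Suc j) \<ge> 2 * QQ \<alpha> j" "DD \<alpha> (Suc j) \<le> DD \<alpha> j / 2"
proof -
  show "QQ \<alpha> j \<ge> 0" "QQ \<alpha> (Suc j) \<ge> 0" using QQ_nn by auto
  show "DD \<alpha> j \<ge> 0" "DD \<alpha> (Suc j) \<ge> 0" using DD_pos' less_imp_le by auto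
  show "\<bar>PHI \<alpha> j\<bar> \<le> QQ \<alpha> j / 2" using PHI_le assms K1 by simp
  show "\<bar>EE \<alpha> j\<bar> \<le> DD \<alpha> (Suc j) / 2" using EE_bound by blast
  show "QQ \<alpha> (Suc j) * DD \<alpha> j - QQ \<alpha> j * DD \<alpha> (Suc j) = 1" by (rule det)
  show "QQ \<alpha> (Suc j) \<ge> 2 * QQ \<alpha> j" using QQ_double assms by simp
  show "DD \<alpha> (Suc j) \<le> DD \<alpha> j / 2" using DD_half assms by simp
qed

lemma valley_bound:
  fixes n m :: int and j mm :: nat
  assumes m5: "mm \<ge> 5" and jK: "j \<ge> K + 1 + mm"
    and xy: "\<bar>WW \<alpha> n m j\<bar> > \<bar>WW \<alpha> n m (Suc j)\<bar>"
    and yz: "\<bar>WW \<alpha> n m (Suc j)\<bar> \<le> \<bar>WW \<alpha> n m (Suc (Suc j))\<bar>"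
  shows "\<bar>real_of_int n * (real_of_int m - \<alpha> * real_of_int n + gamma_star \<alpha>)\<bar> \<ge> C_R R - 2/2^mm"
proof -
  define x y z where "x = WW \<alpha> n m j" "y = WW \<alpha> n m (Suc j)" "z = WW \<alpha> n m (Suc (Suc j))"
  have jK': "j \<ge> K" "Suc j \<ge> K" using jK by auto
  note F0 = facts_at[OF jK'(1)]
  note F1 = facts_at[OF jK'(2)]
  have ax: "\<bar>x\<bar> \<ge> 1/2" "\<bar>y\<bar> \<ge> 1/2" "\<bar>z\<bar> \<ge> 1/2" using OSq_abs by (auto simp: x_y_z_def)
  have P0: "real_of_int n * (real_of_int m - \<alpha> * real_of_int n + gamma_star \<alpha>) =
      Pp (QQ \<alpha> j) (QQ \<alpha> (Suc j)) (DD \<alpha> j) (DD \<alpha> (Suc j)) (PHI \<alpha> j) (EE \<alpha> j) x y"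
    unfolding x_y_z_def by (rule prod_eq)
  have P1: "real_of_int n * (real_of_int m - \<alpha> * real_of_int n + gamma_star \<alpha>) =
      Pp (QQ \<alpha> (Suc j)) (QQ \<alpha> (Suc (Suc j))) (DD \<alpha> (Suc j)) (DD \<alpha> (Suc (Suc j))) (PHI \<alpha> (Suc j)) (EE \<alpha> (Suc j)) y z"
    unfolding x_y_z_def by (rule prod_eq)
  have "(2::real)/2^mm \<ge> 0" by simp
  then have CR: "C_R R - 2/2^mm \<le> 1/4" using C_R_le[OF R3] by linarith
  show ?thesis
  proof (cases "x * y < 0")
    case True
    have "\<bar>Pp (QQ \<alpha> j) (QQ \<alpha> (Suc j)) (DD \<alpha> j) (DD \<alpha> (Suc j)) (PHI \<alpha> j) (EE \<alpha> j) x y\<bar> \<ge> 1/4"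
      using F0 ax True by (intro opp_bound) auto
    then show ?thesis using P0 CR by linarith
  next
    case nxy: False
    show ?thesis
    proof (cases "y * z < 0")
      case True
      have "\<bar>Pp (QQ \<alpha> (Suc j)) (QQ \<alpha> (Suc (Suc j))) (DD \<alpha> (Suc j)) (DD \<alpha> (Suc (Suc j))) (PHI \<alpha> (Suc j)) (EE \<alpha> (Suc j)) y z\<bar> \<ge> 1/4"
        using F1 ax True by (intro opp_bound) auto
      then show ?thesis using P1 CR by linarith
    next
      case nyz: False
      have rq: "QQ \<alpha> (Suc (Suc j)) = AA \<alpha> (Suc j) * QQ \<alpha> (Suc j) - QQ \<alpha> j" by (rule QQ_rec)
      have rd: "DD \<alpha> (Suc (Suc j)) = AA \<alpha> (Suc j) * DD \<alpha> (Suc j) - DD \<alpha> j" by (rule DD_rec)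
      have rp: "PHI \<alpha> (Suc j) = PHI \<alpha> j + TT \<alpha> (Suc j) * QQ \<alpha> (Suc j) / 2" by (rule PHI_Suc)
      have re: "EE \<alpha> j = EE \<alpha> (Suc j) + TT \<alpha> (Suc j) * DD \<alpha> (Suc j) / 2" using EE_rec[of j] by simp
      have rz: "z = AA \<alpha> (Suc j) * y - x + TT \<alpha> (Suc j) / 2" unfolding x_y_z_def by (rule WW_rec)
      have H0: "\<And>sg. sg = 1 \<or> sg = -1 \<Longrightarrow> Pp (QQ \<alpha> j) (QQ \<alpha> (Suc j)) (DD \<alpha> j) (DD \<alpha> (Suc j)) (sg * PHI \<alpha> j) (sg * EE \<alpha> j) (1/2) (1/2)
         \<ge> C_R R - 2 / 2^mm" using H_index[OF m5 jK] by blast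
      have H1: "\<And>sg. sg = 1 \<or> sg = -1 \<Longrightarrow> Pp (QQ \<alpha> (Suc j)) (QQ \<alpha> (Suc (Suc j))) (DD \<alpha> (Suc j)) (DD \<alpha> (Suc (Suc j))) (sg * PHI \<alpha> (Suc j)) (sg * EE \<alpha> (Suc j)) (1/2) (1/2)
         \<ge> C_R R - 2 / 2^mm" using H_index[OF m5, of "Suc j"] jK by simp
      have absP: "- QQ \<alpha> j / 2 \<le> PHI \<alpha> j" "PHI \<alpha> j \<le> QQ \<alpha> j / 2"
        "- QQ \<alpha> (Suc j) / 2 \<le> PHI \<alpha> (Suc j)" "PHI \<alpha> (Suc j) \<le> QQ \<alpha> (Suc j) / 2"
        "- DD \<alpha> (Suc j) / 2 \<le> EE \<alpha> j" "EE \<alpha> j \<le> DD \<alpha> (Suc j) / 2"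
        "- DD \<alpha> (Suc (Suc j)) / 2 \<le> EE \<alpha> (Suc j)" "EE \<alpha> (Suc j) \<le> DD \<alpha> (Suc (Suc j)) / 2"
        using F0(5,6) F1(5,6) by (auto simp: abs_le_iff)
      show ?thesis
      proof (cases "y > 0")
        case True
        have xp: "x > 0" using sign_help1[OF nxy True] ax by auto
        have zp: "z > 0" using sign_help1[of z y] nyz True ax by (auto simp: mult.commute)
        have xgy: "x \<ge> y" using xy xp True by (simp add: x_y_z_def)
        have zgy: "AA \<alpha> (Suc j) * y - x + TT \<alpha> (Suc j) / 2 \<ge> y" using yz zp True rz by (simp add: x_y_z_def)
        have y2: "y \<ge> 1/2" using ax(2) True by simp
        have pc_0: "(QQ \<alpha> (Suc j) - QQ \<alpha> j)/2 + PHI \<alpha> j \<ge> 0" using F0(8,9) F1(8,9) absP by argo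
        have pc_1: "(DD \<alpha> j - DD \<alpha> (Suc j))/2 + EE \<alpha> j \<ge> 0" using F0(8,9) F1(8,9) absP by argo
        have pc_2: "(QQ \<alpha> (Suc (Suc j)) - QQ \<alpha> (Suc j))/2 + PHI \<alpha> (Suc j) \<ge> 0" using F0(8,9) F1(8,9) absP by argo
        have pc_3: "(DD \<alpha> (Suc j) - DD \<alpha> (Suc (Suc j)))/2 + EE \<alpha> (Suc j) \<ge> 0" using F0(8,9) F1(8,9) absP by argo
        note pc = pc_0 pc_1 pc_2 pc_3
        have nn_0: "QQ \<alpha> (Suc j) \<ge> 0" using F0(1-4,8,9) F1(2,4,8,9) by argo
        have nn_1: "DD \<alpha> (Suc j) \<ge> 0" using F0(1-4,8,9) F1(2,4,8,9) by argo
        have nn_2: "QQ \<alpha> (Suc j) - QQ \<alpha> j \<ge> 0" using F0(1-4,8,9) F1(2,4,8,9) by argo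
        have nn_3: "DD \<alpha> j - DD \<alpha> (Suc j) \<ge> 0" using F0(1-4,8,9) F1(2,4,8,9) by argo
        have nn_4: "QQ \<alpha> (Suc (Suc j)) - QQ \<alpha> (Suc j) \<ge> 0" using F0(1-4,8,9) F1(2,4,8,9) by argo
        have nn_5: "DD \<alpha> (Suc j) - DD \<alpha> (Suc (Suc j)) \<ge> 0" using F0(1-4,8,9) F1(2,4,8,9) by argo
        note nn = nn_0 nn_1 nn_2 nn_3 nn_4 nn_5
        have V: "Pp (QQ \<alpha> j) (QQ \<alpha> (Suc j)) (DD \<alpha> j) (DD \<alpha> (Suc j)) (PHI \<alpha> j) (EE \<alpha> j) x y \<ge>
           min (Pp (QQ \<alpha> j) (QQ \<alpha> (Suc j)) (DD \<alpha> j) (DD \<alpha> (Suc j)) (PHI \<alpha> j) (EE \<alpha> j) (1/2) (1/2))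
               (Pp (QQ \<alpha> (Suc j)) (QQ \<alpha> (Suc (Suc j))) (DD \<alpha> (Suc j)) (DD \<alpha> (Suc (Suc j))) (PHI \<alpha> (Suc j)) (EE \<alpha> (Suc j)) (1/2) (1/2))"
          by (rule valley[OF rq rd rp re y2 xgy zgy nn pc])
        have "min (Pp (QQ \<alpha> j) (QQ \<alpha> (Suc j)) (DD \<alpha> j) (DD \<alpha> (Suc j)) (PHI \<alpha> j) (EE \<alpha> j) (1/2) (1/2))
               (Pp (QQ \<alpha> (Suc j)) (QQ \<alpha> (Suc (Suc j))) (DD \<alpha> (Suc j)) (DD \<alpha> (Suc (Suc j))) (PHI \<alpha> (Suc j)) (EE \<alpha> (Suc j)) (1/2) (1/2))
             \<ge> C_R R - 2/2^mm" using H0[of 1] H1[of 1] by simp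
        then show ?thesis using V P0 by linarith
      next
        case False
        then have yn: "y < 0" using ax by auto
        have xn: "x < 0" using sign_help2[OF nxy yn] ax by auto
        have zn: "z < 0" using sign_help2[of z y] nyz yn ax by (auto simp: mult.commute)
        have xgy: "-x \<ge> -y" using xy xn yn by (simp add: x_y_z_def)
        have zgy: "AA \<alpha> (Suc j) * (-y) - (-x) + (- TT \<alpha> (Suc j)) / 2 \<ge> -y" using yz zn yn rz by (simp add: x_y_z_def)
        have rp': "- PHI \<alpha> (Suc j) = - PHI \<alpha> j + (- TT \<alpha> (Suc j)) * QQ \<alpha> (Suc j) / 2" using rp by simp
        have re': "- EE \<alpha> j = - EE \<alpha> (Suc j) + (- TT \<alpha> (Suc j)) * DD \<alpha> (Suc j) / 2" using re by simp
        have y2: "-y \<ge> 1/2" using ax(2) yn by simp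
        have pc_0: "(QQ \<alpha> (Suc j) - QQ \<alpha> j)/2 + - PHI \<alpha> j \<ge> 0" using F0(8,9) F1(8,9) absP by argo
        have pc_1: "(DD \<alpha> j - DD \<alpha> (Suc j))/2 + - EE \<alpha> j \<ge> 0" using F0(8,9) F1(8,9) absP by argo
        have pc_2: "(QQ \<alpha> (Suc (Suc j)) - QQ \<alpha> (Suc j))/2 + - PHI \<alpha> (Suc j) \<ge> 0" using F0(8,9) F1(8,9) absP by argo
        have pc_3: "(DD \<alpha> (Suc j) - DD \<alpha> (Suc (Suc j)))/2 + - EE \<alpha> (Suc j) \<ge> 0" using F0(8,9) F1(8,9) absP by argo
        note pc = pc_0 pc_1 pc_2 pc_3
        have nn_0: "QQ \<alpha> (Suc j) \<ge> 0" using F0(1-4,8,9) F1(2,4,8,9) by argo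
        have nn_1: "DD \<alpha> (Suc j) \<ge> 0" using F0(1-4,8,9) F1(2,4,8,9) by argo
        have nn_2: "QQ \<alpha> (Suc j) - QQ \<alpha> j \<ge> 0" using F0(1-4,8,9) F1(2,4,8,9) by argo
        have nn_3: "DD \<alpha> j - DD \<alpha> (Suc j) \<ge> 0" using F0(1-4,8,9) F1(2,4,8,9) by argo
        have nn_4: "QQ \<alpha> (Suc (Suc j)) - QQ \<alpha> (Suc j) \<ge> 0" using F0(1-4,8,9) F1(2,4,8,9) by argo
        have nn_5: "DD \<alpha> (Suc j) - DD \<alpha> (Suc (Suc j)) \<ge> 0" using F0(1-4,8,9) F1(2,4,8,9) by argo
        note nn = nn_0 nn_1 nn_2 nn_3 nn_4 nn_5
        have V: "Pp (QQ \<alpha> j) (QQ \<alpha> (Suc j)) (DD \<alpha> j) (DD \<alpha> (Suc j)) (- PHI \<alpha> j) (- EE \<alpha> j) (-x) (-y) \<ge>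
           min (Pp (QQ \<alpha> j) (QQ \<alpha> (Suc j)) (DD \<alpha> j) (DD \<alpha> (Suc j)) (- PHI \<alpha> j) (- EE \<alpha> j) (1/2) (1/2))
               (Pp (QQ \<alpha> (Suc j)) (QQ \<alpha> (Suc (Suc j))) (DD \<alpha> (Suc j)) (DD \<alpha> (Suc (Suc j))) (- PHI \<alpha> (Suc j)) (- EE \<alpha> (Suc j)) (1/2) (1/2))"
          by (rule valley[OF rq rd rp' re' y2 xgy zgy nn pc])
        have "min (Pp (QQ \<alpha> j) (QQ \<alpha> (Suc j)) (DD \<alpha> j) (DD \<alpha> (Suc j)) (- PHI \<alpha> j) (- EE \<alpha> j) (1/2) (1/2))
               (Pp (QQ \<alpha> (Suc j)) (QQ \<alpha> (Suc (Suc j))) (DD \<alpha> (Suc j)) (DD \<alpha> (Suc (Suc j))) (- PHI \<alpha> (Suc j)) (- EE \<alpha> (Suc j)) (1/2) (1/2))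
             \<ge> C_R R - 2/2^mm" using H0[of "-1"] H1[of "-1"] by simp
        moreover have "Pp (QQ \<alpha> j) (QQ \<alpha> (Suc j)) (DD \<alpha> j) (DD \<alpha> (Suc j)) (- PHI \<alpha> j) (- EE \<alpha> j) (-x) (-y)
           = Pp (QQ \<alpha> j) (QQ \<alpha> (Suc j)) (DD \<alpha> j) (DD \<alpha> (Suc j)) (PHI \<alpha> j) (EE \<alpha> j) x y" by (rule Pp_neg)
        ultimately show ?thesis using V P0 by linarith
      qed
    qed
  qed
qed

end

context ncf_R
begin

lemma no_inf_desc: "\<not> (\<forall>k. \<bar>WW \<alpha> n m (J + Suc k)\<bar> < \<bar>WW \<alpha> n m (J + k)\<bar>)"
proof
  assume h: "\<forall>k. \<bar>WW \<alpha> n m (J + Suc k)\<bar> < \<bar>WW \<alpha> n m (J + k)\<bar>"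
  have "\<forall>k. (\<lambda>k. nat \<bar>OSq \<alpha> n m (J + k)\<bar>) (Suc k) < (\<lambda>k. nat \<bar>OSq \<alpha> n m (J + k)\<bar>) k"
    using h WW_desc by blast
  then show False by (rule nat_descent)
qed

lemma valley_exists:
  assumes "\<bar>WW \<alpha> n m J\<bar> > \<bar>WW \<alpha> n m (Suc J)\<bar>"
  shows "\<exists>j\<ge>J. \<bar>WW \<alpha> n m j\<bar> > \<bar>WW \<alpha> n m (Suc j)\<bar> \<and> \<bar>WW \<alpha> n m (Suc j)\<bar> \<le> \<bar>WW \<alpha> n m (Suc (Suc j))\<bar>"
proof (rule ccontr)
  assume na: "\<not> ?thesis"
  have "\<bar>WW \<alpha> n m (J + Suc k)\<bar> < \<bar>WW \<alpha> n m (J + k)\<bar>" for k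
  proof (induction k)
    case 0 then show ?case using assms by simp
  next
    case (Suc k)
    then show ?case using na[unfolded not_ex] by (metis add_Suc_right le_add1 not_le)
  qed
  then show False using no_inf_desc by blast
qed

lemma main_bound:
  assumes ep: "\<epsilon> > 0"
  shows "\<exists>N0::int. \<forall>n m. \<bar>n\<bar> \<ge> N0 \<longrightarrow>
     \<bar>real_of_int n * (real_of_int m - \<alpha> * real_of_int n + gamma_star \<alpha>)\<bar> \<ge> C_R R - \<epsilon>"
proof -
  obtain k where k: "(1/2::real)^k < \<epsilon>/2" using real_arch_pow_inv[of "\<epsilon>/2" "1/2"] ep by auto
  define mm where "mm = k + 5"
  have m5: "mm \<ge> 5" by (simp add: mm_def)
  have mme: "2/2^mm \<le> \<epsilon>"
  proof -
    have "(2::real)/2^mm = 2 * (1/2)^k * (1/2)^5" by (simp add: mm_def power_add field_simps)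
    also have "\<dots> \<le> 2 * (1/2)^k" by (rule mult_left_le) (simp_all add: power_le_one)
    finally show ?thesis using k by linarith
  qed
  define J0 where "J0 = K + 1 + mm"
  define Q0 Q1 D0 D1 ph E where "Q0 = QQ \<alpha> J0" "Q1 = QQ \<alpha> (Suc J0)" "D0 = DD \<alpha> J0"
     "D1 = DD \<alpha> (Suc J0)" "ph = PHI \<alpha> J0" "E = EE \<alpha> J0"
  note defs = Q0_Q1_D0_D1_ph_E_def
  have D0p: "D0 > 0" "D1 > 0" using DD_pos' by (auto simp: defs)
  have Qn: "Q0 \<ge> 0" "Q1 \<ge> 0" using QQ_nn by (auto simp: defs)
  have D1h: "D1 \<le> D0 / 2" using DD_half[of J0] by (simp add: defs J0_def)
  have dt: "Q1 * D0 - Q0 * D1 = 1" using det[of \<alpha> J0] by (simp add: defs)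
  define c where "c = D0 * \<bar>ph\<bar> + Q0 + Q0 * \<bar>E\<bar> + D1 * \<bar>ph\<bar> + Q1 + Q1 * \<bar>E\<bar>"
  have c0: "c \<ge> 0" using D0p Qn by (simp add: c_def)
  define N0 where "N0 = \<lceil>4 * (c + 1) / D0\<rceil>"
  have N0p: "N0 \<ge> 1"
  proof -
    have "4 * (c + 1) / D0 > 0" using c0 D0p by simp
    then show ?thesis unfolding N0_def by linarith
  qed
  show ?thesis
  proof (intro exI allI impI)
    fix n m :: int
    assume nN: "\<bar>n\<bar> \<ge> N0"
    define Y where "Y = real_of_int m - \<alpha> * real_of_int n + gamma_star \<alpha>"
    have CR: "C_R R - \<epsilon> \<le> 1/4" using C_R_le[OF R3] ep by linarith
    show "\<bar>real_of_int n * (real_of_int m - \<alpha> * real_of_int n + gamma_star \<alpha>)\<bar> \<ge> C_R R - \<epsilon>"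
    proof (cases "\<bar>real_of_int n * Y\<bar> \<ge> 1/4")
      case True then show ?thesis using CR by (simp add: Y_def)
    next
      case False
      have n1: "\<bar>real_of_int n\<bar> \<ge> 1" using nN N0p by linarith
      have Y1: "\<bar>Y\<bar> \<le> 1"
      proof -
        have "\<bar>Y\<bar> = 1 * \<bar>Y\<bar>" by simp
        also have "\<dots> \<le> \<bar>real_of_int n\<bar> * \<bar>Y\<bar>" using n1 by (intro mult_right_mono) auto
        also have "\<dots> = \<bar>real_of_int n * Y\<bar>" by (simp add: abs_mult)
        finally show ?thesis using False by linarith
      qed
      define x0 y0 where "x0 = WW \<alpha> n m J0" "y0 = WW \<alpha> n m (Suc J0)"
      have i1: "real_of_int n - ph = Q1 * x0 - Q0 * y0" using inv1[of n J0 m] by (simp add: defs x0_y0_def)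
      have i2: "Y - E = D0 * y0 - D1 * x0" using inv2[of m n J0] by (simp add: defs x0_y0_def Y_def)
      have ex: "x0 = D0 * (real_of_int n - ph) + Q0 * (Y - E)"
      proof -
        have "D0 * (real_of_int n - ph) + Q0 * (Y - E) = x0 * (Q1 * D0 - Q0 * D1)"
          unfolding i1 i2 by (simp add: algebra_simps)
        then show ?thesis using dt by simp
      qed
      have ey: "y0 = D1 * (real_of_int n - ph) + Q1 * (Y - E)"
      proof -
        have "D1 * (real_of_int n - ph) + Q1 * (Y - E) = y0 * (Q1 * D0 - Q0 * D1)"
          unfolding i1 i2 by (simp add: algebra_simps)
        then show ?thesis using dt by simp
      qed
      have bx: "\<bar>x0 - D0 * real_of_int n\<bar> \<le> c"
      proof -
        have "x0 - D0 * real_of_int n = - (D0 * ph) + Q0 * Y - Q0 * E" using ex by (simp add: algebra_simps)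
        moreover have "\<bar>D0 * ph\<bar> = D0 * \<bar>ph\<bar>" "\<bar>Q0 * E\<bar> = Q0 * \<bar>E\<bar>" "\<bar>Q0 * Y\<bar> \<le> Q0"
          using D0p Qn Y1 by (auto simp: abs_mult intro: mult_left_le)
        moreover have "D1 * \<bar>ph\<bar> \<ge> 0" "Q1 \<ge> 0" "Q1 * \<bar>E\<bar> \<ge> 0" using D0p Qn by auto
        ultimately show ?thesis unfolding c_def by (smt (verit))
      qed
      have "\<bar>y0 - D1 * real_of_int n\<bar> \<le> c"
      proof -
        have "y0 - D1 * real_of_int n = - (D1 * ph) + Q1 * Y - Q1 * E" using ey by (simp add: algebra_simps)
        moreover have "\<bar>D1 * ph\<bar> = D1 * \<bar>ph\<bar>" "\<bar>Q1 * E\<bar> = Q1 * \<bar>E\<bar>" "\<bar>Q1 * Y\<bar> \<le> Q1"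
          using D0p Qn Y1 by (auto simp: abs_mult intro: mult_left_le)
        moreover have "D0 * \<bar>ph\<bar> \<ge> 0" "Q0 \<ge> 0" "Q0 * \<bar>E\<bar> \<ge> 0" using D0p Qn by auto
        ultimately show ?thesis unfolding c_def by (smt (verit))
      qed
      moreover have "\<bar>y0\<bar> \<le> \<bar>D1 * real_of_int n\<bar> + \<bar>y0 - D1 * real_of_int n\<bar>"
        using abs_triangle_ineq[of "D1 * real_of_int n" "y0 - D1 * real_of_int n"] by simp
      moreover have "\<bar>D1 * real_of_int n\<bar> = D1 * \<bar>real_of_int n\<bar>" using D0p by (simp add: abs_mult)
      ultimately have by0: "\<bar>y0\<bar> \<le> D1 * \<bar>real_of_int n\<bar> + c" by linarith
      have "\<bar>D0 * real_of_int n\<bar> - \<bar>x0\<bar> \<le> \<bar>D0 * real_of_int n - x0\<bar>" by (rule abs_triangle_ineq2)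
      moreover have "\<bar>D0 * real_of_int n - x0\<bar> = \<bar>x0 - D0 * real_of_int n\<bar>" by (rule abs_minus_commute)
      moreover have "\<bar>D0 * real_of_int n\<bar> = D0 * \<bar>real_of_int n\<bar>" using D0p by (simp add: abs_mult)
      ultimately have bx0: "\<bar>x0\<bar> \<ge> D0 * \<bar>real_of_int n\<bar> - c" using bx by linarith
      have "D1 * \<bar>real_of_int n\<bar> \<le> D0 / 2 * \<bar>real_of_int n\<bar>" using D1h by (intro mult_right_mono) auto
      moreover have "D0 * \<bar>real_of_int n\<bar> \<ge> 4 * (c + 1)"
      proof -
        have "real_of_int \<bar>n\<bar> \<ge> 4 * (c + 1) / D0" using nN unfolding N0_def by linarith
        then show ?thesis using D0p by (simp add: field_simps)
      qed
      ultimately have start: "\<bar>WW \<alpha> n m J0\<bar> > \<bar>WW \<alpha> n m (Suc J0)\<bar>"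
        using by0 bx0 by (simp add: x0_y0_def)
      obtain j where j: "j \<ge> J0" "\<bar>WW \<alpha> n m j\<bar> > \<bar>WW \<alpha> n m (Suc j)\<bar>"
          "\<bar>WW \<alpha> n m (Suc j)\<bar> \<le> \<bar>WW \<alpha> n m (Suc (Suc j))\<bar>"
        using valley_exists[OF start] by blast
      have "\<bar>real_of_int n * (real_of_int m - \<alpha> * real_of_int n + gamma_star \<alpha>)\<bar> \<ge> C_R R - 2/2^mm"
        using valley_bound[OF m5 _ j(2) j(3)] j(1) by (simp add: J0_def)
      then show ?thesis using mme by linarith
    qed
  qed
qed

end

lemma dist_bound:
  fixes n :: int and \<gamma> \<alpha> B :: real
  assumes "\<And>m::int. \<bar>real_of_int n * (real_of_int m - \<alpha> * real_of_int n + \<gamma>)\<bar> \<ge> B"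
  shows "\<bar>real_of_int n\<bar> * dist_int (real_of_int n * \<alpha> - \<gamma>) \<ge> B"
proof -
  define x where "x = real_of_int n * \<alpha> - \<gamma>"
  have f1: "\<bar>real_of_int n\<bar> * (x - of_int \<lfloor>x\<rfloor>) \<ge> B"
  proof -
    have eq: "real_of_int \<lfloor>x\<rfloor> - \<alpha> * real_of_int n + \<gamma> = - (x - of_int \<lfloor>x\<rfloor>)" by (simp add: x_def algebra_simps)
    have nn: "\<bar>x - of_int \<lfloor>x\<rfloor>\<bar> = x - of_int \<lfloor>x\<rfloor>" by simp
    have "\<bar>real_of_int n * (real_of_int \<lfloor>x\<rfloor> - \<alpha> * real_of_int n + \<gamma>)\<bar> = \<bar>real_of_int n\<bar> * \<bar>x - of_int \<lfloor>x\<rfloor>\<bar>"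
      by (simp only: eq abs_mult abs_minus_cancel)
    then have "\<bar>real_of_int n * (real_of_int \<lfloor>x\<rfloor> - \<alpha> * real_of_int n + \<gamma>)\<bar> = \<bar>real_of_int n\<bar> * (x - of_int \<lfloor>x\<rfloor>)"
      using nn by simp
    then show ?thesis using assms[of "\<lfloor>x\<rfloor>"] by simp
  qed
  have f2: "\<bar>real_of_int n\<bar> * (of_int \<lceil>x\<rceil> - x) \<ge> B"
  proof -
    have eq: "real_of_int \<lceil>x\<rceil> - \<alpha> * real_of_int n + \<gamma> = of_int \<lceil>x\<rceil> - x" by (simp add: x_def algebra_simps)
    have nn: "\<bar>of_int \<lceil>x\<rceil> - x\<bar> = of_int \<lceil>x\<rceil> - x" by simp
    have "\<bar>real_of_int n * (real_of_int \<lceil>x\<rceil> - \<alpha> * real_of_int n + \<gamma>)\<bar> = \<bar>real_of_int n\<bar> * \<bar>of_int \<lceil>x\<rceil> - x\<bar>"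
      by (simp only: eq abs_mult)
    then have "\<bar>real_of_int n * (real_of_int \<lceil>x\<rceil> - \<alpha> * real_of_int n + \<gamma>)\<bar> = \<bar>real_of_int n\<bar> * (of_int \<lceil>x\<rceil> - x)"
      using nn by simp
    then show ?thesis using assms[of "\<lceil>x\<rceil>"] by simp
  qed
  have "\<bar>real_of_int n\<bar> * dist_int x = min (\<bar>real_of_int n\<bar> * (x - of_int \<lfloor>x\<rfloor>)) (\<bar>real_of_int n\<bar> * (of_int \<lceil>x\<rceil> - x))"
    unfolding dist_int_def by (simp add: min_mult_distrib_left)
  then show ?thesis using f1 f2 by (simp add: x_def)
qed

context ncf_R
begin

lemma gamma_notin: "gamma_star \<alpha> \<notin> {of_int m + \<alpha> * of_int k | m k :: int. True}"
proof
  assume "gamma_star \<alpha> \<in> {of_int m + \<alpha> * of_int k | m k :: int. True}"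
  then obtain m0 k0 :: int where g: "gamma_star \<alpha> = of_int m0 + \<alpha> * of_int k0" by blast
  define n m where "n = k0" "m = - m0"
  have Y0: "real_of_int m - \<alpha> * real_of_int n + gamma_star \<alpha> = 0" using g by (simp add: n_m_def)
  have "\<bar>WW \<alpha> n m (K + Suc k)\<bar> < \<bar>WW \<alpha> n m (K + k)\<bar>" for k
  proof -
    define j where "j = K + k"
    have jK: "j \<ge> K" by (simp add: j_def)
    have e: "DD \<alpha> j * WW \<alpha> n m (Suc j) = DD \<alpha> (Suc j) * WW \<alpha> n m j - EE \<alpha> j"
      using inv2[of m n j] Y0 by linarith
    have D: "DD \<alpha> j > 0" "DD \<alpha> (Suc j) > 0" using DD_pos' by auto
    have D25: "DD \<alpha> (Suc j) \<le> 2/5 * DD \<alpha> j" using DD_Suc'[of j] rem_le_25[OF jK] D by (simp add: mult_right_mono)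
    have Eb: "\<bar>EE \<alpha> j\<bar> \<le> DD \<alpha> (Suc j) / 2" using EE_bound by blast
    have w: "\<bar>WW \<alpha> n m j\<bar> \<ge> 1/2" by (rule OSq_abs)
    have "DD \<alpha> j * \<bar>WW \<alpha> n m (Suc j)\<bar> = \<bar>DD \<alpha> j * WW \<alpha> n m (Suc j)\<bar>"
      using D by (simp add: abs_mult)
    also have "\<dots> = \<bar>DD \<alpha> (Suc j) * WW \<alpha> n m j - EE \<alpha> j\<bar>" using e by simp
    also have "\<dots> \<le> DD \<alpha> (Suc j) * \<bar>WW \<alpha> n m j\<bar> + \<bar>EE \<alpha> j\<bar>"
    proof -
      have "\<bar>DD \<alpha> (Suc j) * WW \<alpha> n m j - EE \<alpha> j\<bar> \<le> \<bar>DD \<alpha> (Suc j) * WW \<alpha> n m j\<bar> + \<bar>EE \<alpha> j\<bar>"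
        by (rule abs_triangle_ineq4)
      moreover have "\<bar>DD \<alpha> (Suc j) * WW \<alpha> n m j\<bar> = DD \<alpha> (Suc j) * \<bar>WW \<alpha> n m j\<bar>" using D by (simp add: abs_mult)
      ultimately show ?thesis by linarith
    qed
    also have "\<dots> \<le> DD \<alpha> (Suc j) * (\<bar>WW \<alpha> n m j\<bar> + 1/2)" using Eb by (simp add: algebra_simps)
    also have "\<dots> \<le> 2/5 * DD \<alpha> j * (\<bar>WW \<alpha> n m j\<bar> + 1/2)" using D25 by (intro mult_right_mono) auto
    also have "\<dots> < DD \<alpha> j * \<bar>WW \<alpha> n m j\<bar>"
    proof -
      have "2/5 * (\<bar>WW \<alpha> n m j\<bar> + 1/2) < \<bar>WW \<alpha> n m j\<bar>" using w by argo
      then have "DD \<alpha> j * (2/5 * (\<bar>WW \<alpha> n m j\<bar> + 1/2)) < DD \<alpha> j * \<bar>WW \<alpha> n m j\<bar>" using D by simp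
      then show ?thesis by (simp add: algebra_simps)
    qed
    finally have "DD \<alpha> j * \<bar>WW \<alpha> n m (Suc j)\<bar> < DD \<alpha> j * \<bar>WW \<alpha> n m j\<bar>" .
    then show ?thesis using D by (simp add: j_def)
  qed
  then show False using no_inf_desc by blast
qed

lemma M_bound: "ereal (C_R R) \<le> M_inh \<alpha> (gamma_star \<alpha>)"
proof -
  define L where "L = M_inh \<alpha> (gamma_star \<alpha>)"
  have key: "ereal (C_R R - e) \<le> L" if e: "e > 0" for e
  proof -
    obtain N0 :: int where N0: "\<And>n m. \<bar>n\<bar> \<ge> N0 \<Longrightarrow>
        \<bar>real_of_int n * (real_of_int m - \<alpha> * real_of_int n + gamma_star \<alpha>)\<bar> \<ge> C_R R - e"
      using main_bound[OF e] by blast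
    have ev: "eventually (\<lambda>n::int. ereal (C_R R - e) \<le> ereal (\<bar>real_of_int n\<bar> * dist_int (real_of_int n * \<alpha> - gamma_star \<alpha>))) cofinite"
      unfolding eventually_cofinite
    proof (rule finite_subset)
      show "{n::int. \<not> ereal (C_R R - e) \<le> ereal (\<bar>real_of_int n\<bar> * dist_int (real_of_int n * \<alpha> - gamma_star \<alpha>))} \<subseteq> {-N0..N0}"
      proof
        fix n :: int
        assume "n \<in> {n. \<not> ereal (C_R R - e) \<le> ereal (\<bar>real_of_int n\<bar> * dist_int (real_of_int n * \<alpha> - gamma_star \<alpha>))}"
        then have nn: "\<not> (C_R R - e \<le> \<bar>real_of_int n\<bar> * dist_int (real_of_int n * \<alpha> - gamma_star \<alpha>))" by simp
        have "\<not> \<bar>n\<bar> \<ge> N0"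
        proof
          assume "\<bar>n\<bar> \<ge> N0"
          then have "C_R R - e \<le> \<bar>real_of_int n\<bar> * dist_int (real_of_int n * \<alpha> - gamma_star \<alpha>)"
            using N0 by (intro dist_bound) auto
          then show False using nn by simp
        qed
        then show "n \<in> {-N0..N0}" by auto
      qed
    qed simp
    show ?thesis unfolding L_def M_inh_def by (rule Liminf_bounded[OF ev])
  qed
  have "ereal (C_R R) \<le> L"
  proof (rule ereal_le_epsilon2)
    fix e :: real assume e: "0 < e"
    have k: "ereal (C_R R - e) \<le> L" by (rule key[OF e])
    show "ereal (C_R R) \<le> L + ereal e"
    proof (cases L)
      case (real l)
      then show ?thesis using k by simp
    next
      case PInf then show ?thesis by simp
    next
      case MInf then show ?thesis using k by simp
    qed
  qed
  then show ?thesis by (simp add: L_def)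
qed

lemma rho_bound: "M_inh \<alpha> (gamma_star \<alpha>) \<le> rho \<alpha>"
  unfolding rho_def using gamma_notin by (intro SUP_upper) auto

end

lemma ev_ge:
  fixes \<alpha> :: real and r :: int
  assumes "ereal (of_int r) \<le> Liminf sequentially (\<lambda>i. ereal (of_int (ncf_a \<alpha> i)))"
  shows "\<exists>K\<ge>1. \<forall>i\<ge>K. ncf_a \<alpha> i \<ge> r"
proof -
  have "ereal (of_int r - 1/2) < Liminf sequentially (\<lambda>i. ereal (of_int (ncf_a \<alpha> i)))"
    using assms by (rule less_le_trans[rotated]) simp
  then have "eventually (\<lambda>i. ereal (of_int (ncf_a \<alpha> i)) > ereal (of_int r - 1/2)) sequentially"
    by (rule less_LiminfD)
  then obtain N where N: "\<And>i. i \<ge> N \<Longrightarrow> ereal (of_int (ncf_a \<alpha> i)) > ereal (of_int r - 1/2)"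
    unfolding eventually_sequentially by blast
  have "ncf_a \<alpha> i \<ge> r" if "i \<ge> Suc N" for i
  proof -
    have "real_of_int (ncf_a \<alpha> i) > of_int r - 1/2" using N[of i] that by simp
    then show ?thesis by linarith
  qed
  then show ?thesis by (intro exI[of _ "Suc N"]) auto
qed

lemma rho_ge_C:
  fixes \<alpha> :: real and r :: int
  assumes "0 < \<alpha>" "\<alpha> < 1" "\<alpha> \<notin> \<rat>" "r \<ge> 3"
    and "ereal (of_int r) \<le> Liminf sequentially (\<lambda>i. ereal (of_int (ncf_a \<alpha> i)))"
  shows "ereal (C_R r) \<le> M_inh \<alpha> (gamma_star \<alpha>)" "M_inh \<alpha> (gamma_star \<alpha>) \<le> rho \<alpha>"
proof -
  obtain K where K: "K \<ge> 1" "\<And>i. i \<ge> K \<Longrightarrow> ncf_a \<alpha> i \<ge> r" using ev_ge[OF assms(5)] by blast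
  interpret ncf_R \<alpha> K r using assms K by unfold_locales auto
  show "ereal (C_R r) \<le> M_inh \<alpha> (gamma_star \<alpha>)" by (rule M_bound)
  show "M_inh \<alpha> (gamma_star \<alpha>) \<le> rho \<alpha>" by (rule rho_bound)
qed

lemma frac_aux: "(u::real) \<noteq> 0 \<Longrightarrow> C \<noteq> 0 \<Longrightarrow> (A / u) * (B / 2) / (4 * (C / u)) = (A * B) / (8 * C)"
  by (simp add: field_simps)

lemma C_even_alg:
  fixes r s :: real
  assumes s0: "s \<ge> 0" and ss: "s * s = r * r - 4" and r4: "r \<ge> 4"
  shows "(1 - 2 * (1 / (r + 1 - (r - s)/2))) * (1 - (r - s)/2) / (4 * (1 - 1 / (r + 1 - (r - s)/2) * ((r - s)/2)))
     = 1/4 * (r - 2) / (s + 1)"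
proof -
  define u where "u = r + s + 2"
  have u0: "u > 0" using s0 r4 by (simp add: u_def)
  have d: "1 / (r + 1 - (r - s)/2) = 2 / u" by (simp add: u_def field_simps)
  have h1: "1 - 2 * (2 / u) = (r + s - 2) / u" using u0 by (simp add: u_def field_simps)
  have h2: "1 - (r - s)/2 = (s - r + 2) / 2" by (simp add: field_simps)
  have h3: "1 - 2 / u * ((r - s)/2) = (2 * s + 2) / u" using u0 by (simp add: u_def field_simps)
  have k: "(r + s - 2) * (s - r + 2) = 4 * (r - 2)"
  proof -
    have "(r + s - 2) * (s - r + 2) = s * s - (r - 2) * (r - 2)" by (simp add: algebra_simps)
    then show ?thesis using ss by (simp add: algebra_simps)
  qed
  have "(1 - 2 * (2 / u)) * (1 - (r - s)/2) / (4 * (1 - 2 / u * ((r - s)/2)))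
      = ((r + s - 2) / u) * ((s - r + 2) / 2) / (4 * ((2 * s + 2) / u))" by (simp only: h1 h2 h3)
  also have "\<dots> = ((r + s - 2) * (s - r + 2)) / (8 * (2 * s + 2))" using u0 s0 by (intro frac_aux) auto
  also have "\<dots> = 4 * (r - 2) / (8 * (2 * s + 2))" by (simp only: k)
  also have "\<dots> = 1/4 * (r - 2) / (s + 1)" using s0 by (simp add: field_simps)
  finally show ?thesis by (simp only: d)
qed

lemma C_odd_alg:
  fixes r s :: real
  assumes s1: "s > 1" and ss: "s * s = (r + 1) * (r + 1) - 4" and r3: "r \<ge> 3"
  shows "(1 - 2 * (1 / (r - (r + 1 - s)/2))) * (1 - (r + 1 - s)/2) / (4 * (1 - 1 / (r - (r + 1 - s)/2) * ((r + 1 - s)/2)))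
     = 1/4 * (2*r - 2 - s) / (s - 1)"
proof -
  define u where "u = r - 1 + s"
  have u0: "u > 0" using s1 r3 by (simp add: u_def)
  have d: "1 / (r - (r + 1 - s)/2) = 2 / u" by (simp add: u_def field_simps)
  have h1: "1 - 2 * (2 / u) = (r + s - 5) / u" using u0 by (simp add: u_def field_simps)
  have h2: "1 - (r + 1 - s)/2 = (s - r + 1) / 2" by (simp add: field_simps)
  have h3: "1 - 2 / u * ((r + 1 - s)/2) = (2 * s - 2) / u" using u0 by (simp add: u_def field_simps)
  have k: "(r + s - 5) * (s - r + 1) = 4 * (2*r - 2 - s)"
  proof -
    have "(r + s - 5) * (s - r + 1) = s * s - 4 * s - (r - 5) * (r - 1)" by (simp add: algebra_simps)
    then show ?thesis using ss by (simp add: algebra_simps)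
  qed
  have "(1 - 2 * (2 / u)) * (1 - (r + 1 - s)/2) / (4 * (1 - 2 / u * ((r + 1 - s)/2)))
      = ((r + s - 5) / u) * ((s - r + 1) / 2) / (4 * ((2 * s - 2) / u))" by (simp only: h1 h2 h3)
  also have "\<dots> = ((r + s - 5) * (s - r + 1)) / (8 * (2 * s - 2))" using u0 s1 by (intro frac_aux) auto
  also have "\<dots> = 4 * (2*r - 2 - s) / (8 * (2 * s - 2))" by (simp only: k)
  also have "\<dots> = 1/4 * (2*r - 2 - s) / (s - 1)" using s1 by (simp add: field_simps)
  finally show ?thesis by (simp only: d)
qed

lemma C_R_even:
  fixes r :: int
  assumes "even r" "r \<ge> 3"
  shows "C_R r = 1/4 * (r - 2) / (sqrt (r^2 - 4) + 1)"
proof -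
  have r4: "r \<ge> 4" using assms by presburger
  define s where "s = sqrt ((real_of_int r)^2 - 4)"
  have M2: "(real_of_int r)^2 - 4 \<ge> 0"
  proof -
    have "real_of_int r * real_of_int r \<ge> 4 * 4" using r4 by (intro mult_mono) auto
    then show ?thesis by (simp add: power2_eq_square)
  qed
  have s0: "s \<ge> 0" using M2 by (simp add: s_def)
  have ss: "s * s = real_of_int r * real_of_int r - 4" using M2 by (simp add: s_def power2_eq_square[symmetric])
  have "C_R r = (1 - 2 * (1 / (real_of_int r + 1 - (real_of_int r - s)/2))) * (1 - (real_of_int r - s)/2) /
      (4 * (1 - 1 / (real_of_int r + 1 - (real_of_int r - s)/2) * ((real_of_int r - s)/2)))"
    using assms by (simp add: C_R_def delta_R_def beta_R_def s_def)
  also have "\<dots> = 1/4 * (real_of_int r - 2) / (s + 1)" using C_even_alg[OF s0 ss] r4 by simp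
  finally show ?thesis by (simp add: s_def)
qed

lemma C_R_odd:
  fixes r :: int
  assumes "odd r" "r \<ge> 3"
  shows "C_R r = 1/4 * (2*r - 2 - sqrt ((r+1)^2 - 4)) / (sqrt ((r+1)^2 - 4) - 1)"
proof -
  define s where "s = sqrt ((real_of_int r + 1)^2 - 4)"
  have M2: "(real_of_int r + 1)^2 - 4 > 1"
  proof -
    have "(real_of_int r + 1) * (real_of_int r + 1) \<ge> 4 * 4" using assms by (intro mult_mono) auto
    then show ?thesis by (simp add: power2_eq_square)
  qed
  have s1: "s > 1" using M2 by (simp add: s_def)
  have ss: "s * s = (real_of_int r + 1) * (real_of_int r + 1) - 4" using M2 by (simp add: s_def power2_eq_square[symmetric])
  have "C_R r = (1 - 2 * (1 / (real_of_int r - (real_of_int r + 1 - s)/2))) * (1 - (real_of_int r + 1 - s)/2) /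
      (4 * (1 - 1 / (real_of_int r - (real_of_int r + 1 - s)/2) * ((real_of_int r + 1 - s)/2)))"
    using assms by (simp add: C_R_def delta_R_def beta_R_def s_def)
  also have "\<dots> = 1/4 * (2 * real_of_int r - 2 - s) / (s - 1)" using C_odd_alg[OF s1 ss] assms by simp
  finally show ?thesis by (simp add: s_def)
qed

lemma sqrt12: "sqrt (12::real) = 2 * sqrt 3"
proof -
  have "sqrt (12::real) = sqrt (4 * 3)" by simp
  also have "\<dots> = sqrt 4 * sqrt 3" by (rule real_sqrt_mult)
  also have "sqrt (4::real) = 2" by (simp add: real_sqrt_eq_iff)
  finally show ?thesis by simp
qed

lemma C_R_3: "C_R 3 = 1 / (6 * sqrt 3 + 8)"
proof -
  have "C_R 3 = 1/4 * (2*3 - 2 - sqrt ((3+1)^2 - 4)) / (sqrt ((3+1)^2 - 4) - 1)"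
    using C_R_odd[of 3] by simp
  also have "sqrt ((3+1)^2 - 4) = (2 * sqrt 3 :: real)" using sqrt12 by simp
  finally have e: "C_R 3 = 1/4 * (4 - 2 * sqrt 3) / (2 * sqrt 3 - 1)" by simp
  define t :: real where "t = sqrt 3"
  have tt: "t * t = 3" by (simp add: t_def)
  have t1: "t > 1" by (simp add: t_def)
  have "1/4 * (4 - 2 * t) / (2 * t - 1) = 1 / (6 * t + 8)"
  proof -
    have "(4 - 2 * t) * (6 * t + 8) = 4 * (2 * t - 1)"
    proof -
      have "(4 - 2 * t) * (6 * t + 8) = 32 + 8 * t - 12 * (t * t)" by (simp add: algebra_simps)
      then show ?thesis using tt by simp
    qed
    then show ?thesis using t1 by (simp add: field_simps)
  qed
  then show ?thesis using e by (simp add: t_def)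
qed

lemma C_R_4: "C_R 4 = 1 / (4 * sqrt 3 + 2)"
proof -
  have "C_R 4 = 1/4 * (4 - 2) / (sqrt (4^2 - 4) + 1)"
    using C_R_even[of 4] by simp
  also have "sqrt (4^2 - 4) = (2 * sqrt 3 :: real)" using sqrt12 by simp
  finally have e: "C_R 4 = 1/4 * 2 / (2 * sqrt 3 + 1)" by simp
  have t0: "sqrt (3::real) > 0" by simp
  show ?thesis unfolding e using t0 by (simp add: field_simps)
qed

theorem theorem1:
  fixes \<alpha> :: real and R :: ereal
  assumes "0 < \<alpha>" "\<alpha> < 1" "\<alpha> \<notin> \<rat>"
    and R_def: "R = Liminf sequentially (\<lambda>i. ereal (of_int (ncf_a \<alpha> i)))"
    and "R \<ge> 3"
  shows "(\<forall>r::int. R = ereal (of_int r) \<longrightarrow>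
            rho \<alpha> \<ge> M_inh \<alpha> (gamma_star \<alpha>)
          \<and> M_inh \<alpha> (gamma_star \<alpha>) \<ge> ereal (C_R r)
          \<and> (even r \<longrightarrow> C_R r = 1/4 * (r - 2) / (sqrt (r^2 - 4) + 1))
          \<and> (odd r \<longrightarrow> C_R r = 1/4 * (2*r - 2 - sqrt ((r+1)^2 - 4)) / (sqrt ((r+1)^2 - 4) - 1)))
      \<and> C_R 3 = 1 / (6 * sqrt 3 + 8)
      \<and> rho \<alpha> \<ge> ereal (1 / (6 * sqrt 3 + 8))
      \<and> C_R 4 = 1 / (4 * sqrt 3 + 2)
      \<and> (R \<ge> 4 \<longrightarrow> rho \<alpha> \<ge> ereal (1 / (4 * sqrt 3 + 2)))"
proof -
  have L3: "ereal (of_int 3) \<le> Liminf sequentially (\<lambda>i. ereal (of_int (ncf_a \<alpha> i)))"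
    using assms(5) R_def by simp
  have G3: "ereal (C_R 3) \<le> M_inh \<alpha> (gamma_star \<alpha>)" "M_inh \<alpha> (gamma_star \<alpha>) \<le> rho \<alpha>"
    using rho_ge_C[OF assms(1-3) _ L3] by auto
  have A: "\<forall>r::int. R = ereal (of_int r) \<longrightarrow>
            rho \<alpha> \<ge> M_inh \<alpha> (gamma_star \<alpha>)
          \<and> M_inh \<alpha> (gamma_star \<alpha>) \<ge> ereal (C_R r)
          \<and> (even r \<longrightarrow> C_R r = 1/4 * (r - 2) / (sqrt (r^2 - 4) + 1))
          \<and> (odd r \<longrightarrow> C_R r = 1/4 * (2*r - 2 - sqrt ((r+1)^2 - 4)) / (sqrt ((r+1)^2 - 4) - 1))"
  proof (intro allI impI)
    fix r :: int
    assume Rr: "R = ereal (of_int r)"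
    have r3: "r \<ge> 3" using assms(5) Rr by simp
    have Lr: "ereal (of_int r) \<le> Liminf sequentially (\<lambda>i. ereal (of_int (ncf_a \<alpha> i)))"
      using Rr R_def by simp
    note G = rho_ge_C[OF assms(1-3) r3 Lr]
    show "rho \<alpha> \<ge> M_inh \<alpha> (gamma_star \<alpha>)
          \<and> M_inh \<alpha> (gamma_star \<alpha>) \<ge> ereal (C_R r)
          \<and> (even r \<longrightarrow> C_R r = 1/4 * (r - 2) / (sqrt (r^2 - 4) + 1))
          \<and> (odd r \<longrightarrow> C_R r = 1/4 * (2*r - 2 - sqrt ((r+1)^2 - 4)) / (sqrt ((r+1)^2 - 4) - 1))"
      using G C_R_even[OF _ r3] C_R_odd[OF _ r3] by blast
  qed
  have B: "rho \<alpha> \<ge> ereal (1 / (6 * sqrt 3 + 8))"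
  proof -
    have "ereal (C_R 3) \<le> rho \<alpha>" using G3 by (rule order_trans)
    then show ?thesis using C_R_3 by simp
  qed
  have C: "R \<ge> 4 \<longrightarrow> rho \<alpha> \<ge> ereal (1 / (4 * sqrt 3 + 2))"
  proof
    assume "R \<ge> 4"
    then have L4: "ereal (of_int 4) \<le> Liminf sequentially (\<lambda>i. ereal (of_int (ncf_a \<alpha> i)))"
      using R_def by simp
    have G4: "ereal (C_R 4) \<le> M_inh \<alpha> (gamma_star \<alpha>)" "M_inh \<alpha> (gamma_star \<alpha>) \<le> rho \<alpha>"
      using rho_ge_C[OF assms(1-3) _ L4] by auto
    have "ereal (C_R 4) \<le> rho \<alpha>" using G4 by (rule order_trans)
    then show "rho \<alpha> \<ge> ereal (1 / (4 * sqrt 3 + 2))" using C_R_4 by simp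
  qed
  show ?thesis using A B C C_R_3 C_R_4 by blast
qed

end
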